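(* Let $p(\cdot)\in\mathcal{P}^{\log}_{0}(\mathbb{R}^{3})$ with $2\leq p^{-}\leq p(\cdot)\leq p^{+}\leq 6$, and $1\leq\rho\leq\infty$. Then there exists a positive constant $C$ such that for any $f\in\mathcal{L}^{1}(0,\infty;F\dot{B}^{2-\frac{3}{p(\cdot)}}_{p(\cdot),1}(\mathbb{R}^{3}))\cap\mathcal{L}^{1}(0,\infty;F\dot{B}^{\frac{1}{2}}_{2,1}(\mathbb{R}^{3}))$, \[ \Big\|\int_{0}^{t}e^{(t-\tau)\Delta}\mathbb{P}f\,d\tau\Big\|_{\mathcal{X}_{t}}\leq C\Big(\|f\|_{\mathcal{L}^{1}_{t}(F\dot{B}^{2-\frac{3}{p(\cdot)}}_{p(\cdot),1})}+\|f\|_{\mathcal{L}^{1}_{t}(F\dot{B}^{\frac{1}{2}}_{2,1})}\Big). \]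
   Context: $e^{t\Delta}$ is the Fourier multiplier $e^{-t|\xi|^2}$; $\mathbb{P}$ is the Leray projector, the matrix Fourier multiplier with symbol $(\delta_{ij}-\xi_i\xi_j/|\xi|^2)_{i,j=1}^3$. Fourier transform: $\widehat f(\xi)=(2\pi)^{-3/2}\int f(x)e^{-ix\cdot\xi}dx$. Let $\chi$ be a smooth radial non-increasing function supported in $B(0,\frac43)$ with $\chi\equiv1$ on $B(0,\frac34)$; $\varphi(\xi)=\chi(\xi/2)-\chi(\xi)$, $\varphi_j(\xi)=\varphi(2^{-j}\xi)$, $S_jf=\mathcal{F}^{-1}(\chi(2^{-j}\cdot)\widehat f)$; $\mathcal{S}'_h$ is the set of tempered distributions with $S_jf\to0$ as $j\to-\infty$. Constant exponents: $\|f\|_{F\dot B^s_{p,1}}=\sum_j2^{js}\|\varphi_j\widehat f\|_{L^p}$ and $\|f\|_{\mathcal{L}^\lambda_t(F\dot B^s_{p,1})}=\sum_j2^{js}\|\varphi_j\widehat f\|_{L^\lambda(0,\infty;L^p_\xi)}$. Variable exponents: $\mathcal{P}_0$ is the set of measurable $p:\mathbb{R}^3\to[1,\infty)$ with $1<p^-:=\operatorname{ess\,inf}p$, $p^+:=\operatorname{ess\,sup}p<\infty$; $\|f\|_{L^{p(\cdot)}}=\inf\{\lambda>0:\int|f/\lambda|^{p(x)}dx\le1\}$; $\mathcal{P}_0^{\log}$ is the set of $p\in\mathcal{P}_0$ such that $1/p_\infty=\lim_{|x|\to\infty}1/p(x)$ exists and for some $C$, $|1/p(x)-1/p(y)|\le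 C/\log(e+1/|x-y|)$ and $|1/p(x)-1/p_\infty|\le C/\log(e+|x|)$. For a function $s(\cdot)$: $\|f\|_{F\dot B^{s(\cdot)}_{p(\cdot),1}}=\sum_j\|2^{js(\cdot)}\varphi_j\widehat f\|_{L^{p(\cdot)}}$ and $\|f\|_{\mathcal{L}^\rho_t(F\dot B^{s(\cdot)}_{p(\cdot),1})}=\sum_j\|2^{js(\cdot)}\varphi_j\widehat f\|_{L^\rho(0,\infty;L^{p(\cdot)}_\xi)}$, with $2^{js(\cdot)}$ the function $\xi\mapsto 2^{js(\xi)}$. The space $\mathcal{X}_t=\mathcal{L}^{\rho}(0,\infty;F\dot{B}^{2-\frac{3}{p(\cdot)}+\frac{2}{\rho}}_{p(\cdot),1})\cap\mathcal{L}^{1}(0,\infty;F\dot{B}^{\frac{5}{2}}_{2,1})\cap\mathcal{L}^{\infty}(0,\infty;F\dot{B}^{\frac{1}{2}}_{2,1})$ with norm $\|u\|_{\mathcal{X}_t}=\max\{\|u\|_{\mathcal{L}^\rho_t(F\dot B^{2-\frac{3}{p(\cdot)}+\frac2\rho}_{p(\cdot),1})},\|u\|_{\mathcal{L}^1_t(F\dot B^{\frac52}_{2,1})},\|u\|_{\mathcal{L}^\infty_t(F\dot B^{\frac12}_{2,1})}\}$. *)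

theory Defs
  imports "HOL-Analysis.Analysis" "HOL-Probability.Probability"
begin

fun Ck :: "nat \<Rightarrow> (real^3 \<Rightarrow> real) \<Rightarrow> bool" where
  "Ck 0 f = continuous_on UNIV f"
| "Ck (Suc k) f = ((\<forall>x. f differentiable (at x)) \<and>
                   (\<forall>v. Ck k (\<lambda>x. frechet_derivative f (at x) v)))"

definition smooth :: "(real^3 \<Rightarrow> real) \<Rightarrow> bool" where
  "smooth f \<longleftrightarrow> (\<forall>k. Ck k f)"

definition admissible_cutoff :: "(real^3 \<Rightarrow> real) \<Rightarrow> bool" where
  "admissible_cutoff chi \<longleftrightarrow> smooth chi
     \<and> (\<exists>h::real \<Rightarrow> real. antimono_on {0..} h \<and> (\<forall>\<xi>. chi \<xi> = h (norm \<xi>)))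
     \<and> (\<forall>\<xi>. norm \<xi> \<ge> 4/3 \<longrightarrow> chi \<xi> = 0)
     \<and> (\<forall>\<xi>. norm \<xi> \<le> 3/4 \<longrightarrow> chi \<xi> = 1)"

definition phi_j :: "(real^3 \<Rightarrow> real) \<Rightarrow> int \<Rightarrow> real^3 \<Rightarrow> real" where
  "phi_j chi j \<xi> = chi ((2 powr (- real_of_int j) / 2) *\<^sub>R \<xi>) - chi ((2 powr (- real_of_int j)) *\<^sub>R \<xi>)"

definition enn_powr :: "ennreal \<Rightarrow> real \<Rightarrow> ennreal" where
  "enn_powr x a = (if x = \<top> then \<top> else ennreal (enn2real x powr a))"

definition zsum :: "(int \<Rightarrow> ennreal) \<Rightarrow> ennreal" where
  "zsum a = (SUP n::nat. \<Sum>j\<in>{- int n..int n}. a j)"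

definition inv_exp :: "ennreal \<Rightarrow> real" where
  "inv_exp \<rho> = (if \<rho> = \<top> then 0 else 1 / enn2real \<rho>)"

definition Lp_norm :: "real \<Rightarrow> (real^3 \<Rightarrow> real) \<Rightarrow> ennreal" where
  "Lp_norm p F = enn_powr (\<integral>\<^sup>+ \<xi>. ennreal (\<bar>F \<xi>\<bar> powr p) \<partial>lborel) (1 / p)"

definition Lvar_norm :: "(real^3 \<Rightarrow> real) \<Rightarrow> (real^3 \<Rightarrow> real) \<Rightarrow> ennreal" where
  "Lvar_norm p F = Inf (ennreal ` {lam::real. lam > 0 \<and>
      (\<integral>\<^sup>+ \<xi>. ennreal (\<bar>F \<xi> / lam\<bar> powr p \<xi>) \<partial>lborel) \<le> 1})"

definition Lt_norm :: "ennreal \<Rightarrow> (real \<Rightarrow> ennreal) \<Rightarrow> ennreal" where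
  "Lt_norm lam N = (if lam = \<top> then esssup (restrict_space lborel {0<..}) N
     else enn_powr (\<integral>\<^sup>+ t\<in>{0<..}. enn_powr (N t) (enn2real lam) \<partial>lborel) (1 / enn2real lam))"

definition ess_sup_r :: "(real^3 \<Rightarrow> real) \<Rightarrow> ereal" where
  "ess_sup_r p = esssup lborel (\<lambda>x. ereal (p x))"

definition ess_inf_r :: "(real^3 \<Rightarrow> real) \<Rightarrow> ereal" where
  "ess_inf_r p = - esssup lborel (\<lambda>x. - ereal (p x))"

definition P0 :: "(real^3 \<Rightarrow> real) set" where
  "P0 = {p. p \<in> borel_measurable lborel \<and> (\<forall>x. 1 \<le> p x)
            \<and> 1 < ess_inf_r p \<and> ess_sup_r p < \<infinity>}"

definition P0_log :: "(real^3 \<Rightarrow> real) set" where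
  "P0_log = {p. p \<in> P0 \<and> (\<exists>p_inf C::real.
       ((\<lambda>x. 1 / p x) \<longlongrightarrow> 1 / p_inf) at_infinity
     \<and> (\<forall>x y. \<bar>1 / p x - 1 / p y\<bar> \<le> C / ln (exp 1 + 1 / dist x y))
     \<and> (\<forall>x. \<bar>1 / p x - 1 / p_inf\<bar> \<le> C / ln (exp 1 + norm x)))}"

definition leray :: "real^3 \<Rightarrow> complex^3 \<Rightarrow> complex^3" where
  "leray \<xi> v = (\<chi> i. v $ i - (\<Sum>j\<in>UNIV. complex_of_real (\<xi> $ i * \<xi> $ j / (norm \<xi>)\<^sup>2) * v $ j))"

text \<open>Fourier transform of the Duhamel term  int_0^t e^{(t-tau)Delta} P f(tau) dtau,
  given the (spatial) Fourier transform g of f\<close>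
definition duhamel_hat :: "(real \<Rightarrow> real^3 \<Rightarrow> complex^3) \<Rightarrow> real \<Rightarrow> real^3 \<Rightarrow> complex^3" where
  "duhamel_hat g t \<xi> = set_lebesgue_integral lborel {0..t}
      (\<lambda>\<tau>. exp (- (t - \<tau>) * (norm \<xi>)\<^sup>2) *\<^sub>R leray \<xi> (g \<tau> \<xi>))"

definition CL_norm :: "(real^3 \<Rightarrow> real) \<Rightarrow> ennreal \<Rightarrow> real \<Rightarrow> real \<Rightarrow>
     (real \<Rightarrow> real^3 \<Rightarrow> complex^3) \<Rightarrow> ennreal" where
  "CL_norm chi lam s p g = zsum (\<lambda>j. ennreal (2 powr (real_of_int j * s)) *
     Lt_norm lam (\<lambda>t. Lp_norm p (\<lambda>\<xi>. norm (phi_j chi j \<xi> *\<^sub>R g t \<xi>))))"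

definition CL_var_norm :: "(real^3 \<Rightarrow> real) \<Rightarrow> ennreal \<Rightarrow> (real^3 \<Rightarrow> real) \<Rightarrow> (real^3 \<Rightarrow> real) \<Rightarrow>
     (real \<Rightarrow> real^3 \<Rightarrow> complex^3) \<Rightarrow> ennreal" where
  "CL_var_norm chi lam s p g = zsum (\<lambda>j.
     Lt_norm lam (\<lambda>t. Lvar_norm p (\<lambda>\<xi>. 2 powr (real_of_int j * s \<xi>) * norm (phi_j chi j \<xi> *\<^sub>R g t \<xi>))))"

definition X_norm :: "(real^3 \<Rightarrow> real) \<Rightarrow> (real^3 \<Rightarrow> real) \<Rightarrow> ennreal \<Rightarrow>
     (real \<Rightarrow> real^3 \<Rightarrow> complex^3) \<Rightarrow> ennreal" where
  "X_norm chi p \<rho> u = max (CL_var_norm chi \<rho> (\<lambda>\<xi>. 2 - 3 / p \<xi> + 2 * inv_exp \<rho>) p u)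
      (max (CL_norm chi 1 (5/2) 2 u) (CL_norm chi \<top> (1/2) 2 u))"

end

theory Submission
  imports Defs
begin

lemma young_pt:
  fixes q m y :: real assumes "q \<ge> 1" "m \<ge> 0" "y \<ge> 0"
  shows "q * (m powr (q-1)) * y \<le> y powr q + (q-1) * m powr q"
proof (cases "q = 1")
  case True then show ?thesis using assms by (cases "m = 0") auto
next
  case False
  hence q1: "q > 1" using assms by simp
  define r where "r = q/(q-1)"
  have r1: "r > 1" using q1 by (simp add: r_def)
  have inv: "1/q + 1/r = 1" using q1 by (simp add: r_def field_simps)
  have "y * m powr (q-1) \<le> y powr q / q + (m powr (q-1)) powr r / r"
    by (rule Youngs_inequality) (use q1 r1 inv assms in auto)
  also have "(m powr (q-1)) powr r = m powr q" using q1 by (simp add: powr_powr r_def)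
  finally have "y * m powr (q-1) \<le> y powr q / q + m powr q / r" .
  hence "q * (y * m powr (q-1)) \<le> q * (y powr q / q + m powr q / r)"
    using q1 by (intro mult_left_mono) auto
  also have "\<dots> = y powr q + (q-1) * m powr q" using q1 by (simp add: r_def field_simps)
  finally show ?thesis by (simp add: mult_ac)
qed

lemma le_one_plus_powr: fixes y q :: real assumes "y \<ge> 0" "q \<ge> 1" shows "y \<le> 1 + y powr q"
proof (cases "y \<le> 1")
  case True then show ?thesis by (smt (verit) powr_ge_zero)
next
  case False
  hence "y powr 1 \<le> y powr q" using assms by (intro powr_mono) auto
  then show ?thesis using False by simp
qed

lemma jensen_enn:
  fixes w y :: "'b \<Rightarrow> real"
  assumes q: "q \<ge> 1" and wm[measurable]: "w \<in> borel_measurable M" and ym[measurable]: "y \<in> borel_measurable M"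
    and w0: "\<And>x. w x \<ge> 0" and y0: "\<And>x. y x \<ge> 0"
    and w1: "(\<integral>\<^sup>+ x. ennreal (w x) \<partial>M) = 1"
  shows "enn_powr (\<integral>\<^sup>+ x. ennreal (w x * y x) \<partial>M) q \<le> (\<integral>\<^sup>+ x. ennreal (w x * y x powr q) \<partial>M)"
proof (cases "(\<integral>\<^sup>+ x. ennreal (w x * y x powr q) \<partial>M) = \<top>")
  case True then show ?thesis by simp
next
  case False
  define A where "A = (\<integral>\<^sup>+ x. ennreal (w x * y x powr q) \<partial>M)"
  define m where "m = (\<integral>\<^sup>+ x. ennreal (w x * y x) \<partial>M)"
  have "m \<le> (\<integral>\<^sup>+ x. ennreal (w x) + ennreal (w x * y x powr q) \<partial>M)"
    unfolding m_def
  proof (intro nn_integral_mono)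
    fix x
    have "w x * y x \<le> w x * (1 + y x powr q)"
      using w0 y0 q le_one_plus_powr by (intro mult_left_mono) auto
    then show "ennreal (w x * y x) \<le> ennreal (w x) + ennreal (w x * y x powr q)"
      using w0[of x] y0[of x] by (simp add: distrib_left flip: ennreal_plus)
  qed
  also have "\<dots> = 1 + A" unfolding A_def by (subst nn_integral_add) (auto simp: w1)
  finally have mA: "m \<le> 1 + A" .
  have Afin: "A < \<top>" using False A_def by (simp add: top.not_eq_extremum)
  have "1 + A < \<top>" using Afin by simp
  hence "m < \<top>" using mA by (rule le_less_trans[rotated])
  then obtain m' where m': "m = ennreal m'" "m' \<ge> 0" by (cases m rule: ennreal_cases) auto
  obtain a where a: "A = ennreal a" "a \<ge> 0" using Afin by (cases A rule: ennreal_cases) auto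
  have pt: "ennreal (q * m' powr (q-1)) * ennreal (w x * y x)
      \<le> ennreal (w x * y x powr q) + ennreal ((q-1) * m' powr q) * ennreal (w x)" for x
  proof -
    have "q * m' powr (q-1) * y x \<le> y x powr q + (q-1) * m' powr q"
      by (rule young_pt) (use q m' y0 in auto)
    hence "w x * (q * m' powr (q-1) * y x) \<le> w x * (y x powr q + (q-1) * m' powr q)"
      using w0 by (intro mult_left_mono) auto
    hence "(q * m' powr (q-1)) * (w x * y x) \<le> w x * y x powr q + ((q-1) * m' powr q) * w x"
      by (simp add: algebra_simps)
    hence "ennreal ((q * m' powr (q-1)) * (w x * y x)) \<le> ennreal (w x * y x powr q + ((q-1) * m' powr q) * w x)"
      by (rule ennreal_leI)
    also have "\<dots> = ennreal (w x * y x powr q) + ennreal ((q-1) * m' powr q) * ennreal (w x)"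
      using q w0[of x] y0[of x] m' by (simp add: ennreal_plus ennreal_mult)
    finally show ?thesis using q w0[of x] y0[of x] m' by (simp add: ennreal_mult)
    
  qed
  have "ennreal (q * m' powr (q-1)) * m = (\<integral>\<^sup>+ x. ennreal (q * m' powr (q-1)) * ennreal (w x * y x) \<partial>M)"
    unfolding m_def by (subst nn_integral_cmult) auto
  also have "\<dots> \<le> (\<integral>\<^sup>+ x. ennreal (w x * y x powr q) + ennreal ((q-1) * m' powr q) * ennreal (w x) \<partial>M)"
    by (intro nn_integral_mono pt)
  also have "\<dots> = A + ennreal ((q-1) * m' powr q)"
    unfolding A_def by (subst nn_integral_add) (auto simp: nn_integral_cmult w1)
  finally have ineq: "ennreal (q * m' powr (q-1)) * m \<le> A + ennreal ((q-1) * m' powr q)" .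
  have "ennreal (q * m' powr (q-1) * m') \<le> ennreal (a + (q-1) * m' powr q)"
    using ineq m' a q by (simp add: ennreal_plus ennreal_mult)
  hence r1: "q * m' powr (q-1) * m' \<le> a + (q-1) * m' powr q"
    using a q m' by (subst (asm) ennreal_le_iff) auto
  have pw: "m' powr (q-1) * m' = m' powr q"
  proof (cases "m' = 0")
    case False then show ?thesis using m' by (simp add: powr_add[symmetric] powr_diff)
  qed (use q in auto)
  have "q * m' powr (q-1) * m' = q * m' powr q" using pw by (simp add: mult.assoc)
  with r1 have "q * m' powr q \<le> a + (q-1) * m' powr q" by simp
  hence "m' powr q \<le> a" by (simp add: algebra_simps)
  then show ?thesis unfolding enn_powr_def using m' a by (simp flip: A_def m_def)
qed

definition modu :: "'a measure \<Rightarrow> ('a \<Rightarrow> real) \<Rightarrow> ('a \<Rightarrow> real) \<Rightarrow> real \<Rightarrow> ennreal" where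
  "modu M p F lam = (\<integral>\<^sup>+ x. ennreal (\<bar>F x / lam\<bar> powr p x) \<partial>M)"

definition lux :: "'a measure \<Rightarrow> ('a \<Rightarrow> real) \<Rightarrow> ('a \<Rightarrow> real) \<Rightarrow> ennreal" where
  "lux M p F = Inf (ennreal ` {lam. lam > 0 \<and> modu M p F lam \<le> 1})"

lemma Lvar_lux: "Lvar_norm p F = lux lborel p F"
  unfolding Lvar_norm_def lux_def modu_def ..

lemma modu_mono:
  assumes "0 < a" "a \<le> b" "\<And>x. p x \<ge> 0" "\<And>x. \<bar>F x\<bar> \<le> \<bar>G x\<bar>"
  shows "modu M p F b \<le> modu M p G a"
  unfolding modu_def
proof (intro nn_integral_mono ennreal_leI)
  fix x
  have "\<bar>F x / b\<bar> \<le> \<bar>G x / a\<bar>"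
    using assms(1,2) assms(4)[of x] by (auto simp: abs_div intro!: frac_le)
  then show "\<bar>F x / b\<bar> powr p x \<le> \<bar>G x / a\<bar> powr p x"
    using assms(3) by (intro powr_mono2) auto
qed

lemma lux_le: assumes "r > 0" "modu M p F r \<le> 1" shows "lux M p F \<le> ennreal r"
  unfolding lux_def using assms by (intro Inf_lower) auto

lemma lux_less:
  assumes "lux M p F < ennreal r" "\<And>x. p x \<ge> 0"
  shows "r > 0 \<and> modu M p F r \<le> 1"
proof -
  from assms(1) obtain lam where lam: "lam > 0" "modu M p F lam \<le> 1" "ennreal lam < ennreal r"
    unfolding lux_def Inf_less_iff by auto
  hence "lam < r" by (simp add: ennreal_less_iff)
  hence "modu M p F r \<le> modu M p F lam" using lam assms(2) by (intro modu_mono) auto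
  then show ?thesis using lam \<open>lam < r\<close> by auto
qed

lemma lux_mono:
  assumes "\<And>x. \<bar>F x\<bar> \<le> \<bar>G x\<bar>" "\<And>x. p x \<ge> 0"
  shows "lux M p F \<le> lux M p G"
  unfolding lux_def
proof (intro Inf_mono)
  fix b assume "b \<in> ennreal ` {lam. lam > 0 \<and> modu M p G lam \<le> 1}"
  then obtain lam where "b = ennreal lam" "lam > 0" "modu M p G lam \<le> 1" by auto
  moreover have "modu M p F lam \<le> modu M p G lam" using assms \<open>lam > 0\<close> by (intro modu_mono) auto
  ultimately show "\<exists>a\<in>ennreal ` {lam. lam > 0 \<and> modu M p F lam \<le> 1}. a \<le> b" by force
qed

lemma modu_cmult: "c > 0 \<Longrightarrow> modu M p (\<lambda>x. c * G x) (c * lam) = modu M p G lam"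
  unfolding modu_def by simp

lemma lux_cmult_le:
  assumes c: "c \<ge> 0" and p: "\<And>x. p x \<ge> 0"
  shows "lux M p (\<lambda>x. c * G x) \<le> ennreal c * lux M p G"
proof (cases "c = 0")
  case True
  have h: "lux M p (\<lambda>x. c * G x) \<le> ennreal e" if "e > 0" for e
  proof -
    have "modu M p (\<lambda>x. c * G x) e = 0" unfolding modu_def True by simp
    then show ?thesis using that by (intro lux_le) auto
  qed
  have "lux M p (\<lambda>x. c * G x) \<le> 0"
  proof (rule ennreal_le_epsilon)
    fix e :: real assume "0 < e" thus "lux M p (\<lambda>x. c * G x) \<le> 0 + ennreal e" using h by simp
  qed
  then show ?thesis by simp
next
  case False
  hence c0: "c > 0" using c by simp
  show ?thesis
  proof (cases "lux M p G = \<top>")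
    case True 
    have "ennreal c * lux M p G = \<top>" unfolding True using c0 by simp
    then show ?thesis by simp
  next
    case False
    then obtain l where l: "lux M p G = ennreal l" "l \<ge> 0" by (cases "lux M p G" rule: ennreal_cases) auto
    have hh: "lux M p (\<lambda>x. c * G x) \<le> ennreal c * lux M p G + ennreal e" if e: "e > 0" for e
    proof -
      have "l < l + e / c" using e c0 by simp
      hence "lux M p G < ennreal (l + e / c)" unfolding l(1) using l(2) by (subst ennreal_less_iff) auto
      from lux_less[OF this p] have "modu M p G (l + e/c) \<le> 1" by simp
      hence "modu M p (\<lambda>x. c * G x) (c * (l + e/c)) \<le> 1" using modu_cmult[OF c0] by metis
      moreover have "0 < c * (l + e/c)" using c0 l e by (simp add: add_nonneg_pos)
      ultimately have "lux M p (\<lambda>x. c * G x) \<le> ennreal (c * (l + e/c))"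
        by (intro lux_le)
      also have "c * (l + e/c) = c * l + e" using c0 by (simp add: field_simps)
      also have "ennreal (c * l + e) = ennreal (c * l) + ennreal e"
        using l c0 e by (intro ennreal_plus) auto
      also have "ennreal (c * l) = ennreal c * ennreal l" using l c0 by (intro ennreal_mult) auto
      finally show ?thesis unfolding l(1) .
    qed
    show ?thesis by (rule ennreal_le_epsilon) (blast intro: hh)
  qed
qed

lemma lux_cmult:
  assumes c: "c > 0" and p: "\<And>x. p x \<ge> 0"
  shows "lux M p (\<lambda>x. c * G x) = ennreal c * lux M p G"
proof (rule antisym)
  show "lux M p (\<lambda>x. c * G x) \<le> ennreal c * lux M p G" using c p by (intro lux_cmult_le) auto
  have "lux M p G = lux M p (\<lambda>x. (1/c) * (c * G x))" using c by simp
  also have "\<dots> \<le> ennreal (1/c) * lux M p (\<lambda>x. c * G x)" using c p by (intro lux_cmult_le) auto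
  finally have "ennreal c * lux M p G \<le> ennreal c * (ennreal (1/c) * lux M p (\<lambda>x. c * G x))"
    by (intro mult_left_mono) auto
  also have "\<dots> = (ennreal c * ennreal (1/c)) * lux M p (\<lambda>x. c * G x)"
    by (simp add: mult.assoc)
  also have "ennreal c * ennreal (1/c) = ennreal (c * (1/c))" using c by (intro ennreal_mult[symmetric]) auto
  also have "c * (1/c) = 1" using c by simp
  finally show "ennreal c * lux M p G \<le> lux M p (\<lambda>x. c * G x)" by simp
qed

lemma lux_rat:
  assumes p: "\<And>x. p x \<ge> 0"
  shows "lux M p F = (INF q\<in>{q::rat. 0 < q}. if modu M p F (real_of_rat q) \<le> 1 then ennreal (real_of_rat q) else \<top>)"
proof (rule antisym)
  show "lux M p F \<le> (INF q\<in>{q::rat. 0 < q}. if modu M p F (real_of_rat q) \<le> 1 then ennreal (real_of_rat q) else \<top>)"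
    by (intro INF_greatest) (auto intro: lux_le)
  show "(INF q\<in>{q::rat. 0 < q}. if modu M p F (real_of_rat q) \<le> 1 then ennreal (real_of_rat q) else \<top>) \<le> lux M p F"
    unfolding lux_def
  proof (intro Inf_greatest)
    fix b assume "b \<in> ennreal ` {lam. lam > 0 \<and> modu M p F lam \<le> 1}"
    then obtain lam where b: "b = ennreal lam" "lam > 0" "modu M p F lam \<le> 1" by auto
    have hh: "(INF q\<in>{q::rat. 0 < q}. if modu M p F (real_of_rat q) \<le> 1 then ennreal (real_of_rat q) else \<top>) \<le> ennreal lam + ennreal e"
      if e: "e > 0" for e
    proof -
      obtain s where s: "s \<in> \<rat>" "lam < s" "s < lam + e" using Rats_dense_in_real[of lam "lam + e"] e by auto
      then obtain q where q: "s = real_of_rat q" using Rats_cases by blast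
      have "0 < real_of_rat q" using s q b by linarith
      hence q0: "0 < q" by simp
      have "modu M p F s \<le> modu M p F lam" using s b p by (intro modu_mono) auto
      hence "modu M p F (real_of_rat q) \<le> 1" using b q by simp
      hence "(INF q\<in>{q::rat. 0 < q}. if modu M p F (real_of_rat q) \<le> 1 then ennreal (real_of_rat q) else \<top>) \<le> ennreal (real_of_rat q)"
        using q0 by (intro INF_lower2[of q]) auto
      also have "\<dots> \<le> ennreal (lam + e)" using s q by (intro ennreal_leI) auto
      also have "\<dots> = ennreal lam + ennreal e" using b e by (simp add: ennreal_plus)
      finally show ?thesis .
    qed
    then show "(INF q\<in>{q::rat. 0 < q}. if modu M p F (real_of_rat q) \<le> 1 then ennreal (real_of_rat q) else \<top>) \<le> b"
      unfolding b by (rule ennreal_le_epsilon) (blast intro: hh)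
  qed
qed

lemma lux_measurable:
  fixes H :: "'b \<Rightarrow> 'a::euclidean_space \<Rightarrow> real"
  assumes p: "\<And>x. p x \<ge> 0" and pm[measurable]: "p \<in> borel_measurable lborel"
    and Hm[measurable]: "(\<lambda>z. H (fst z) (snd z)) \<in> borel_measurable (N \<Otimes>\<^sub>M lborel)"
  shows "(\<lambda>t. lux lborel p (H t)) \<in> borel_measurable N"
proof -
  have cq: "countable {q::rat. 0 < q}" by simp
  have m1: "(\<lambda>z. ennreal (\<bar>H (fst z) (snd z) / r\<bar> powr p (snd z))) \<in> borel_measurable (N \<Otimes>\<^sub>M lborel)" for r
    by measurable
  have m2: "(\<lambda>t. modu lborel p (H t) r) \<in> borel_measurable N" for r
    unfolding modu_def using lborel.borel_measurable_nn_integral[of "\<lambda>t x. ennreal (\<bar>H t x / r\<bar> powr p x)" N] m1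
    by (simp add: split_beta')
  have m3: "(\<lambda>t. if modu lborel p (H t) r \<le> 1 then ennreal r else \<top>) \<in> borel_measurable N" for r
  proof (rule measurable_If)
    show "{t \<in> space N. modu lborel p (H t) r \<le> 1} \<in> sets N"
      using m2[of r] by measurable
  qed auto
  show ?thesis
    unfolding lux_rat[OF p]
    by (rule borel_measurable_INF[OF cq]) (rule m3)
qed

lemma enn_powr_mono: "x \<le> y \<Longrightarrow> r \<ge> 0 \<Longrightarrow> enn_powr x r \<le> enn_powr y r"
  unfolding enn_powr_def
  by (cases x rule: ennreal_cases; cases y rule: ennreal_cases) (auto intro!: ennreal_leI powr_mono2 simp: top_unique)

lemma minkowski_lux:
  fixes H :: "real \<Rightarrow> 'a::euclidean_space \<Rightarrow> real" and F :: "'a \<Rightarrow> real" and p :: "'a \<Rightarrow> real"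
  assumes p1: "\<And>x. p x \<ge> 1" and pm[measurable]: "p \<in> borel_measurable lborel"
    and Hm[measurable]: "(\<lambda>z. H (fst z) (snd z)) \<in> borel_measurable (lborel \<Otimes>\<^sub>M lborel)"
    and H0: "\<And>t x. H t x \<ge> 0"
    and FH: "\<And>x. ennreal \<bar>F x\<bar> \<le> (\<integral>\<^sup>+ t. ennreal (H t x) \<partial>lborel)"
  shows "lux lborel p F \<le> (\<integral>\<^sup>+ t. lux lborel p (H t) \<partial>lborel)"
proof -
  have p0: "\<And>x. p x \<ge> 0" using p1 by (meson order.trans zero_le_one)
  define N where "N t = lux lborel p (H t)" for t
  have Nm[measurable]: "N \<in> borel_measurable lborel" unfolding N_def
    by (rule lux_measurable[OF p0 pm Hm])
  define A where "A = (\<integral>\<^sup>+ t. N t \<partial>lborel)"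
  show ?thesis
  proof (cases "A = \<top>")
    case True then show ?thesis by (simp add: A_def N_def)
  next
    case False
    obtain h :: "real \<Rightarrow> ennreal" where hm[measurable]: "h \<in> borel_measurable lborel"
      and hfin: "integral\<^sup>N lborel h \<noteq> \<infinity>" and hpos: "\<And>t. 0 < h t \<and> h t < \<infinity>"
      using sigma_finite_measure.Ex_finite_integrable_function[OF sigma_finite_lborel] by auto
    define E where "E = integral\<^sup>N lborel h"
    have E0: "E \<noteq> 0"
    proof
      assume "E = 0"
      then have "AE t in lborel. h t = 0" using nn_integral_0_iff_AE[OF hm] by (simp add: E_def)
      then have "AE t in (lborel :: real measure). False"
      proof (rule AE_mp)
        show "AE t in lborel. h t = 0 \<longrightarrow> False" using hpos by (intro AE_I2) (metis less_irrefl)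
      qed
      then have "ae_filter (lborel :: real measure) = bot" by (simp add: eventually_False)
      then show False by (simp add: ae_filter_eq_bot_iff)
    qed
    obtain Er where Er: "E = ennreal Er" "Er > 0"
      using E0 hfin unfolding E_def by (cases "integral\<^sup>N lborel h" rule: ennreal_cases) auto
    have AEN: "AE t in lborel. N t \<noteq> \<top>" using nn_integral_PInf_AE[OF Nm] False A_def by simp
    obtain a where a: "A = ennreal a" "a \<ge> 0" using False by (cases A rule: ennreal_cases) auto
    have main: "lux lborel p F \<le> A + ennreal e" if e: "e > 0" for e
    proof -
      define Ne where "Ne t = N t + ennreal (e/Er) * h t" for t
      have Nem[measurable]: "Ne \<in> borel_measurable lborel" unfolding Ne_def by measurable
      define b where "b = a + e"
      have b0: "b > 0" using a e by (simp add: b_def)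
      have intNe: "(\<integral>\<^sup>+ t. Ne t \<partial>lborel) = ennreal b"
      proof -
        have "(\<integral>\<^sup>+ t. Ne t \<partial>lborel) = A + ennreal (e/Er) * E"
          unfolding Ne_def A_def E_def by (subst nn_integral_add) (auto simp: nn_integral_cmult)
        also have "ennreal (e/Er) * E = ennreal e" unfolding Er(1) using Er e
          by (subst ennreal_mult[symmetric]) auto
        also have "A + ennreal e = ennreal b" unfolding a(1) b_def using a e by (simp add: ennreal_plus)
        finally show ?thesis .
      qed
      define r where "r t = enn2real (Ne t)" for t
      have rm[measurable]: "r \<in> borel_measurable lborel" unfolding r_def by measurable
      have r0: "r t \<ge> 0" for t unfolding r_def by simp
      have r_pos: "r t > 0 \<and> Ne t = ennreal (r t) \<and> modu lborel p (H t) (r t) \<le> 1" if Nt: "N t \<noteq> \<top>" for t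
      proof -
        obtain nt where nt: "N t = ennreal nt" "nt \<ge> 0" using Nt by (cases "N t" rule: ennreal_cases) auto
        obtain ht where ht: "h t = ennreal ht" "ht > 0" using hpos[of t]
          by (cases "h t" rule: ennreal_cases) auto
        have "Ne t = ennreal nt + ennreal ((e/Er) * ht)" unfolding Ne_def nt ht
          by (subst ennreal_mult') (use e Er in auto)
        also have "\<dots> = ennreal (nt + (e/Er) * ht)"
          by (rule ennreal_plus[symmetric]) (use nt e Er ht in auto)
        finally have NeEq: "Ne t = ennreal (nt + (e/Er) * ht)" .
        have pos: "nt + (e/Er) * ht > nt" using ht e Er by simp
        have rt: "r t = nt + (e/Er) * ht" unfolding r_def NeEq
          by (rule enn2real_ennreal) (use pos nt in linarith)
        have "lux lborel p (H t) < ennreal (r t)" unfolding rt N_def[symmetric] nt(1)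
          by (subst ennreal_less_iff) (use pos nt in auto)
        from lux_less[OF this p0] have "modu lborel p (H t) (r t) \<le> 1" by simp
        then show ?thesis using rt pos nt NeEq by auto
      qed
      define w where "w t = r t / b" for t
      have wm[measurable]: "w \<in> borel_measurable lborel" unfolding w_def by measurable
      have w0: "w t \<ge> 0" for t unfolding w_def using r0 b0 by simp
      have w1: "(\<integral>\<^sup>+ t. ennreal (w t) \<partial>lborel) = 1"
      proof -
        have "(\<integral>\<^sup>+ t. ennreal (w t) \<partial>lborel) = (\<integral>\<^sup>+ t. ennreal (1/b) * Ne t \<partial>lborel)"
        proof (rule nn_integral_cong_AE)
          show "AE t in lborel. ennreal (w t) = ennreal (1/b) * Ne t"
            using AEN
          proof (rule AE_mp, intro AE_I2 impI)
            fix t assume "N t \<noteq> \<top>"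
            then have "Ne t = ennreal (r t)" using r_pos by blast
            then show "ennreal (w t) = ennreal (1/b) * Ne t"
              unfolding w_def using b0 r0[of t] by (simp add: ennreal_mult[symmetric] divide_inverse mult.commute)
          qed
        qed
        also have "\<dots> = ennreal (1/b) * ennreal b" by (subst nn_integral_cmult) (auto simp: intNe)
        also have "\<dots> = 1" using b0 by (simp add: ennreal_mult[symmetric])
        finally show ?thesis .
      qed
      define y where "y x t = H t x / r t" for x t
      have y0: "y x t \<ge> 0" for x t unfolding y_def using H0 r0 by simp
      have ptx: "ennreal (\<bar>F x / b\<bar> powr p x) \<le> (\<integral>\<^sup>+ t. ennreal (w t * y x t powr p x) \<partial>lborel)" for x
      proof -
        have "(\<lambda>t. (t, x)) \<in> measurable lborel (lborel \<Otimes>\<^sub>M lborel)"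
          by (intro measurable_Pair measurable_ident_sets measurable_const) auto
        from measurable_compose[OF this Hm]
        have Hxm[measurable]: "(\<lambda>t. H t x) \<in> borel_measurable lborel" by simp
        have ym[measurable]: "y x \<in> borel_measurable lborel" unfolding y_def by measurable
        have "(\<integral>\<^sup>+ t. ennreal (H t x) \<partial>lborel) = (\<integral>\<^sup>+ t. ennreal b * ennreal (w t * y x t) \<partial>lborel)"
        proof (rule nn_integral_cong_AE)
          show "AE t in lborel. ennreal (H t x) = ennreal b * ennreal (w t * y x t)"
            using AEN
          proof (rule AE_mp, intro AE_I2 impI)
            fix t assume "N t \<noteq> \<top>"
            then have "r t > 0" using r_pos by blast
            then have "H t x = b * (w t * y x t)" unfolding w_def y_def using b0 by simp
            then show "ennreal (H t x) = ennreal b * ennreal (w t * y x t)"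
              using b0 w0[of t] y0[of x t] by (simp add: ennreal_mult)
          qed
        qed
        also have "\<dots> = ennreal b * (\<integral>\<^sup>+ t. ennreal (w t * y x t) \<partial>lborel)"
          by (subst nn_integral_cmult) auto
        finally have Fb: "ennreal \<bar>F x\<bar> \<le> ennreal b * (\<integral>\<^sup>+ t. ennreal (w t * y x t) \<partial>lborel)"
          using FH[of x] by simp
        have "ennreal \<bar>F x / b\<bar> \<le> (\<integral>\<^sup>+ t. ennreal (w t * y x t) \<partial>lborel)"
        proof (cases "(\<integral>\<^sup>+ t. ennreal (w t * y x t) \<partial>lborel)" rule: ennreal_cases)
          case (real i)
          then have "ennreal \<bar>F x\<bar> \<le> ennreal (b * i)" using Fb b0 by (simp add: ennreal_mult)
          then have "\<bar>F x\<bar> \<le> b * i" using b0 real by (subst (asm) ennreal_le_iff) auto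
          then have "\<bar>F x / b\<bar> \<le> i" using b0 by (simp add: abs_div divide_le_eq mult.commute)
          then show ?thesis using real by (simp add: ennreal_leI)
        qed simp
        then have "enn_powr (ennreal \<bar>F x / b\<bar>) (p x) \<le> enn_powr (\<integral>\<^sup>+ t. ennreal (w t * y x t) \<partial>lborel) (p x)"
          using p0 by (intro enn_powr_mono) auto
        also have "\<dots> \<le> (\<integral>\<^sup>+ t. ennreal (w t * y x t powr p x) \<partial>lborel)"
          by (rule jensen_enn[OF p1 wm ym w0 y0 w1])
        finally show ?thesis unfolding enn_powr_def by simp
      qed
      have jm: "(\<lambda>z. ennreal (w (fst z) * y (snd z) (fst z) powr p (snd z))) \<in> borel_measurable (lborel \<Otimes>\<^sub>M lborel)"
        unfolding y_def by measurable
      have "modu lborel p F b \<le> (\<integral>\<^sup>+ x. (\<integral>\<^sup>+ t. ennreal (w t * y x t powr p x) \<partial>lborel) \<partial>lborel)"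
        unfolding modu_def by (intro nn_integral_mono ptx)
      also have "\<dots> = (\<integral>\<^sup>+ t. (\<integral>\<^sup>+ x. ennreal (w t * y x t powr p x) \<partial>lborel) \<partial>lborel)"
        using lborel_pair.Fubini'[of "\<lambda>t x. ennreal (w t * y x t powr p x)"] jm
        by (simp add: split_beta')
      also have "\<dots> = (\<integral>\<^sup>+ t. ennreal (w t) * modu lborel p (H t) (r t) \<partial>lborel)"
      proof (rule nn_integral_cong)
        fix t :: real
        have "(\<lambda>x::'a. (t, x)) \<in> measurable lborel (lborel \<Otimes>\<^sub>M lborel)"
          by (intro measurable_Pair measurable_ident_sets measurable_const) auto
        from measurable_compose[OF this Hm]
        have Htm[measurable]: "(\<lambda>x. H t x) \<in> borel_measurable lborel" by simp
        have "(\<integral>\<^sup>+ x. ennreal (w t * y x t powr p x) \<partial>lborel)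
            = (\<integral>\<^sup>+ x. ennreal (w t) * ennreal (\<bar>H t x / r t\<bar> powr p x) \<partial>lborel)"
          using w0[of t] y0 H0 r0 by (intro nn_integral_cong) (simp add: ennreal_mult y_def H0 r0)
        also have "\<dots> = ennreal (w t) * modu lborel p (H t) (r t)"
          unfolding modu_def by (subst nn_integral_cmult) auto
        finally show "(\<integral>\<^sup>+ x. ennreal (w t * y x t powr p x) \<partial>lborel) = ennreal (w t) * modu lborel p (H t) (r t)" .
      qed
      also have "\<dots> \<le> (\<integral>\<^sup>+ t. ennreal (w t) \<partial>lborel)"
      proof (rule nn_integral_mono_AE)
        show "AE t in lborel. ennreal (w t) * modu lborel p (H t) (r t) \<le> ennreal (w t)"
          using AEN
        proof (rule AE_mp, intro AE_I2 impI)
          fix t assume "N t \<noteq> \<top>"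
          then have "modu lborel p (H t) (r t) \<le> 1" using r_pos by blast
          then show "ennreal (w t) * modu lborel p (H t) (r t) \<le> ennreal (w t)"
            using mult_left_mono[of _ 1 "ennreal (w t)"] by simp
        qed
      qed
      also have "\<dots> = 1" by (rule w1)
      finally have "lux lborel p F \<le> ennreal b" using b0 by (intro lux_le)
      also have "ennreal b = A + ennreal e" using a e by (simp add: b_def ennreal_plus)
      finally show ?thesis .
    qed
    have "lux lborel p F \<le> A" by (rule ennreal_le_epsilon) (blast intro: main)
    then show ?thesis by (simp add: A_def N_def)
  qed
qed

lemma powr_le_iff_root:
  fixes i lam q :: real assumes "i \<ge> 0" "lam > 0" "q > 0"
  shows "i \<le> lam powr q \<longleftrightarrow> i powr (1/q) \<le> lam"
proof
  assume "i \<le> lam powr q"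
  hence "i powr (1/q) \<le> (lam powr q) powr (1/q)" using assms by (intro powr_mono2) auto
  also have "\<dots> = lam" using assms by (simp add: powr_powr)
  finally show "i powr (1/q) \<le> lam" .
next
  assume "i powr (1/q) \<le> lam"
  hence "(i powr (1/q)) powr q \<le> lam powr q" using assms by (intro powr_mono2) auto
  also have "(i powr (1/q)) powr q = i" using assms by (simp add: powr_powr)
  finally show "i \<le> lam powr q" .
qed

lemma lux_const:
  fixes F :: "'a \<Rightarrow> real"
  assumes q: "q > 0" and Fm[measurable]: "F \<in> borel_measurable M"
  shows "lux M (\<lambda>_. q) F = enn_powr (\<integral>\<^sup>+ x. ennreal (\<bar>F x\<bar> powr q) \<partial>M) (1/q)"
proof -
  define I where "I = (\<integral>\<^sup>+ x. ennreal (\<bar>F x\<bar> powr q) \<partial>M)"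
  have modu_eq: "modu M (\<lambda>_. q) F lam = ennreal (1 / lam powr q) * I" if lam: "lam > 0" for lam
  proof -
    have "modu M (\<lambda>_. q) F lam = (\<integral>\<^sup>+ x. ennreal (1 / lam powr q) * ennreal (\<bar>F x\<bar> powr q) \<partial>M)"
      unfolding modu_def
    proof (intro nn_integral_cong)
      fix x
      have "\<bar>F x / lam\<bar> powr q = \<bar>F x\<bar> powr q / lam powr q" using lam by (simp add: abs_div powr_divide)
      also have "\<dots> = (1 / lam powr q) * \<bar>F x\<bar> powr q" by simp
      finally have e: "\<bar>F x / lam\<bar> powr q = (1 / lam powr q) * \<bar>F x\<bar> powr q" .
      show "ennreal (\<bar>F x / lam\<bar> powr q) = ennreal (1 / lam powr q) * ennreal (\<bar>F x\<bar> powr q)"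
        unfolding e by (rule ennreal_mult') simp
    qed
    also have "\<dots> = ennreal (1 / lam powr q) * I" unfolding I_def by (subst nn_integral_cmult) auto
    finally show ?thesis .
  qed
  show ?thesis
  proof (cases I rule: ennreal_cases)
    case top
    have "{lam. lam > 0 \<and> modu M (\<lambda>_. q) F lam \<le> 1} = {}"
      using modu_eq top by (auto simp: ennreal_mult_top top_unique)
    then show ?thesis unfolding lux_def I_def[symmetric] top enn_powr_def by simp
  next
    case (real i)
    define s where "s = i powr (1/q)"
    have s0: "s \<ge> 0" unfolding s_def by simp
    have iff: "modu M (\<lambda>_. q) F lam \<le> 1 \<longleftrightarrow> s \<le> lam" if lam: "lam > 0" for lam
    proof -
      have "modu M (\<lambda>_. q) F lam = ennreal (i / lam powr q)"
        unfolding modu_eq[OF lam] real using real lam by (simp add: ennreal_mult[symmetric])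
      also have "\<dots> \<le> 1 \<longleftrightarrow> i / lam powr q \<le> 1" by (simp add: ennreal_le_1)
      also have "\<dots> \<longleftrightarrow> i \<le> lam powr q" using lam by (simp add: divide_le_eq_1)
      also have "\<dots> \<longleftrightarrow> s \<le> lam" unfolding s_def using real lam q by (intro powr_le_iff_root) auto
      finally show ?thesis .
    qed
    have "lux M (\<lambda>_. q) F = ennreal s"
    proof (rule antisym)
      show "lux M (\<lambda>_. q) F \<le> ennreal s"
      proof (cases "s > 0")
        case True then show ?thesis using iff[of s] by (intro lux_le) auto
      next
        case False
        hence s00: "s = 0" using s0 by simp
        have hh: "lux M (\<lambda>_. q) F \<le> ennreal e" if "e > 0" for e
          using that iff[of e] s00 by (intro lux_le) auto
        have "lux M (\<lambda>_. q) F \<le> 0"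
        proof (rule ennreal_le_epsilon)
          fix e :: real assume "0 < e" thus "lux M (\<lambda>_. q) F \<le> 0 + ennreal e" using hh by simp
        qed
        then show ?thesis by (simp add: s00)
      qed
      show "ennreal s \<le> lux M (\<lambda>_. q) F"
        unfolding lux_def by (rule Inf_greatest) (auto intro!: ennreal_leI simp: iff)
    qed
    then show ?thesis unfolding I_def[symmetric] real enn_powr_def s_def using real by simp
  qed
qed

lemma Lp_lux: "F \<in> borel_measurable lborel \<Longrightarrow> Lp_norm 2 F = lux lborel (\<lambda>_. 2) F"
  unfolding Lp_norm_def by (subst lux_const) auto

lemma enn_powr_1: "enn_powr x 1 = x"
  unfolding enn_powr_def by (cases x rule: ennreal_cases) auto

lemma Lt_norm_1: "Lt_norm 1 N = (\<integral>\<^sup>+ t. N t * indicator {0<..} t \<partial>lborel)"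
  unfolding Lt_norm_def by (simp add: enn_powr_1)

lemma Lt_norm_mono_fin:
  assumes "\<And>t. t > 0 \<Longrightarrow> N t \<le> N' t" "\<rho> \<noteq> \<top>"
  shows "Lt_norm \<rho> N \<le> Lt_norm \<rho> N'"
  unfolding Lt_norm_def using assms(2)
proof (simp, intro enn_powr_mono nn_integral_mono)
  fix t
  show "enn_powr (N t) (enn2real \<rho>) * indicator {0<..} t \<le> enn_powr (N' t) (enn2real \<rho>) * indicator {0<..} t"
    using assms(1)[of t] by (cases "t > 0") (auto intro!: enn_powr_mono)
qed auto

lemma Lt_lux:
  fixes n :: "real \<Rightarrow> real"
  assumes r: "r \<ge> 1" and n0: "\<And>t. n t \<ge> 0" and nm[measurable]: "n \<in> borel_measurable lborel"
  shows "Lt_norm (ennreal r) (\<lambda>t. ennreal (n t)) = lux lborel (\<lambda>_. r) (\<lambda>t. n t * indicator {0<..} t)"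
proof -
  have "Lt_norm (ennreal r) (\<lambda>t. ennreal (n t)) =
      enn_powr (\<integral>\<^sup>+ t. ennreal (\<bar>n t * indicator {0<..} t\<bar> powr r) \<partial>lborel) (1/r)"
    unfolding Lt_norm_def using r
  proof (simp, intro arg_cong[where f="\<lambda>X. enn_powr X (1/r)"] nn_integral_cong)
    fix t
    show "enn_powr (ennreal (n t)) r * indicator {0<..} t = ennreal (\<bar>n t * indicator {0<..} t\<bar> powr r)"
      using n0[of t] r by (cases "t > 0") (auto simp: enn_powr_def)
  qed
  also have "\<dots> = lux lborel (\<lambda>_. r) (\<lambda>t. n t * indicator {0<..} t)"
    using r by (subst lux_const) auto
  finally show ?thesis .
qed

lemma exp_integral:
  fixes L :: real assumes L: "L > 0"
  shows "(\<integral>\<^sup>+ t. ennreal (indicator {\<tau>..} t * exp (- (t - \<tau>) * L)) \<partial>lborel) = ennreal (1 / L)"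
proof -
  have "(\<integral>\<^sup>+ t. ennreal (indicator {\<tau>..} t * exp (- (t - \<tau>) * L)) \<partial>lborel)
      = (\<integral>\<^sup>+ x. ennreal (indicator {\<tau>..} (\<tau> + 1 * x) * exp (- ((\<tau> + 1 * x) - \<tau>) * L)) \<partial>lborel)"
    using nn_integral_real_affine[of "\<lambda>t. ennreal (indicator {\<tau>..} t * exp (- (t - \<tau>) * L))" 1 \<tau>] by simp
  also have "\<dots> = (\<integral>\<^sup>+ x. ennreal (1 / L) * ennreal (exponential_density L x) \<partial>lborel)"
    using L by (intro nn_integral_cong) (auto simp: exponential_density_def indicator_def ennreal_mult[symmetric])
  also have "\<dots> = ennreal (1 / L) * (\<integral>\<^sup>+ x. ennreal (exponential_density L x) \<partial>lborel)"
    by (subst nn_integral_cmult) auto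
  also have "(\<integral>\<^sup>+ x. ennreal (exponential_density L x) \<partial>lborel) = 1"
  proof -
    interpret prob_space "density lborel (exponential_density L)"
      using L by (rule prob_space_exponential_density)
    have "emeasure (density lborel (exponential_density L)) UNIV = 1"
      using emeasure_space_1 by simp
    then show ?thesis by (simp add: emeasure_density)
  qed
  finally show ?thesis by simp
qed

lemma coef_le1: "\<bar>(\<xi>::real^3) $ i * \<xi> $ j / (norm \<xi>)\<^sup>2\<bar> \<le> 1"
proof (cases "norm \<xi> = 0")
  case True then show ?thesis by simp
next
  case False
  have "\<bar>\<xi> $ i * \<xi> $ j\<bar> \<le> norm \<xi> * norm \<xi>"
    unfolding abs_mult by (intro mult_mono component_le_norm_cart) auto
  then show ?thesis using False by (simp add: abs_div power2_eq_square divide_le_eq_1)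
qed

lemma leray_comp_bound: "norm (leray \<xi> v $ i) \<le> 4 * norm v"
proof -
  have "norm (leray \<xi> v $ i) \<le> norm (v $ i) + norm (\<Sum>j\<in>UNIV. complex_of_real (\<xi> $ i * \<xi> $ j / (norm \<xi>)\<^sup>2) * v $ j)"
    unfolding leray_def by (simp add: norm_triangle_ineq4)
  also have "\<dots> \<le> norm v + (\<Sum>j\<in>UNIV. norm (complex_of_real (\<xi> $ i * \<xi> $ j / (norm \<xi>)\<^sup>2) * v $ j))"
    by (intro add_mono norm_sum) (rule Finite_Cartesian_Product.norm_nth_le)
  also have "(\<Sum>j\<in>UNIV. norm (complex_of_real (\<xi> $ i * \<xi> $ j / (norm \<xi>)\<^sup>2) * v $ j)) \<le> (\<Sum>j\<in>(UNIV::3 set). norm v)"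
  proof (intro sum_mono)
    fix j
    have "norm (complex_of_real (\<xi> $ i * \<xi> $ j / (norm \<xi>)\<^sup>2) * v $ j) = \<bar>\<xi> $ i * \<xi> $ j / (norm \<xi>)\<^sup>2\<bar> * norm (v $ j)"
      by (simp only: norm_mult norm_of_real)
    also have "\<dots> \<le> 1 * norm v" by (intro mult_mono coef_le1 Finite_Cartesian_Product.norm_nth_le) auto
    finally show "norm (complex_of_real (\<xi> $ i * \<xi> $ j / (norm \<xi>)\<^sup>2) * v $ j) \<le> norm v" by simp
  qed
  also have "(\<Sum>j\<in>(UNIV::3 set). norm v) = 3 * norm v" by simp
  finally show ?thesis by simp
qed

lemma leray_bound: "norm (leray \<xi> v) \<le> 12 * norm v"
proof -
  have "norm (leray \<xi> v) \<le> (\<Sum>i\<in>UNIV. norm (leray \<xi> v $ i))"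
    unfolding norm_vec_def by (rule L2_set_le_sum) simp
  also have "\<dots> \<le> (\<Sum>i\<in>(UNIV::3 set). 4 * norm v)" by (intro sum_mono leray_comp_bound)
  also have "\<dots> = 12 * norm v" by simp
  finally show ?thesis .
qed

lemma vec_nth_measurable[measurable]: "(\<lambda>x::'a::{real_normed_vector}^'n. x $ i) \<in> borel_measurable borel"
  by (intro borel_measurable_continuous_onI continuous_on_component continuous_on_id)

lemma leray_measurable:
  "(\<lambda>z::((real^3) \<times> (complex^3)). leray (fst z) (snd z)) \<in> borel_measurable borel"
proof (subst borel_measurable_euclidean_space, intro ballI)
  fix b :: "complex^3" assume "b \<in> Basis"
  then obtain i u where b: "b = axis i u" "u \<in> Basis" unfolding Basis_vec_def by auto
  have m: "(\<lambda>z::((real^3) \<times> (complex^3)). leray (fst z) (snd z) $ i) \<in> borel_measurable borel"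
    unfolding leray_def by (simp add: borel_prod[symmetric]) measurable
  show "(\<lambda>z. leray (fst z) (snd z) \<bullet> b) \<in> borel_measurable borel"
    unfolding b inner_axis using m by measurable
qed

lemma leray_measurable2[measurable]:
  assumes [measurable]: "f \<in> borel_measurable M" "h \<in> borel_measurable M"
  shows "(\<lambda>x. leray (f x) (h x)) \<in> borel_measurable M"
proof -
  have "(\<lambda>x. (f x, h x)) \<in> M \<rightarrow>\<^sub>M borel \<Otimes>\<^sub>M borel" by measurable
  hence "(\<lambda>x. (f x, h x)) \<in> borel_measurable M" by (simp add: borel_prod)
  from measurable_compose[OF this leray_measurable] show ?thesis by simp
qed

lemma duhamel_alt: "duhamel_hat g t \<xi> = (\<integral>\<tau>. (of_bool (0 \<le> \<tau> \<and> \<tau> \<le> t) * exp (- (t - \<tau>) * (norm \<xi>)\<^sup>2)) *\<^sub>R leray \<xi> (g \<tau> \<xi>) \<partial>lborel)"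
  unfolding duhamel_hat_def set_lebesgue_integral_def
  by (intro Bochner_Integration.integral_cong) (auto simp: indicator_def)

lemma duhamel_measurable:
  assumes gm[measurable]: "(\<lambda>z. g (fst z) (snd z)) \<in> borel_measurable (lborel \<Otimes>\<^sub>M lborel)"
  shows "(\<lambda>z. duhamel_hat g (fst z) (snd z)) \<in> borel_measurable (lborel \<Otimes>\<^sub>M lborel)"
proof -
  let ?M = "((lborel::real measure) \<Otimes>\<^sub>M (lborel::(real^3) measure)) \<Otimes>\<^sub>M (lborel::real measure)"
  have m1[measurable]: "(\<lambda>w. fst (fst w)) \<in> borel_measurable ?M" by measurable
  have m2[measurable]: "(\<lambda>w. snd (fst w)) \<in> borel_measurable ?M" by measurable
  have m3[measurable]: "(\<lambda>w. snd w) \<in> borel_measurable ?M" by measurable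
  have "(\<lambda>w. (snd w, snd (fst w))) \<in> ?M \<rightarrow>\<^sub>M lborel \<Otimes>\<^sub>M lborel" by measurable
  from measurable_compose[OF this gm]
  have m4[measurable]: "(\<lambda>w. g (snd w) (snd (fst w))) \<in> borel_measurable ?M" by simp
  have m5: "(\<lambda>w. leray (snd (fst w)) (g (snd w) (snd (fst w)))) \<in> borel_measurable ?M"
    by (rule leray_measurable2[OF m2 m4])
  have m6: "(\<lambda>w. exp (- (fst (fst w) - snd w) * (norm (snd (fst w)))\<^sup>2)) \<in> borel_measurable ?M"
    by measurable
  have m7: "(\<lambda>w. indicator {w. 0 \<le> snd w \<and> snd w \<le> fst (fst w)} w :: real) \<in> borel_measurable ?M"
  proof (intro borel_measurable_indicator)
    have "{w \<in> space ?M. 0 \<le> snd w \<and> snd w \<le> fst (fst w)} \<in> sets ?M" by measurable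
    then show "{w. 0 \<le> snd w \<and> snd w \<le> fst (fst w)} \<in> sets ?M" by (simp add: space_pair_measure)
  qed
  have m8: "(\<lambda>w. (indicator {w. 0 \<le> snd w \<and> snd w \<le> fst (fst w)} w * exp (- (fst (fst w) - snd w) * (norm (snd (fst w)))\<^sup>2)) *\<^sub>R
        leray (snd (fst w)) (g (snd w) (snd (fst w)))) \<in> borel_measurable ?M"
    using m5 m6 m7 by measurable
  have "(\<lambda>(x, \<tau>). indicator {0..fst x} \<tau> *\<^sub>R (exp (- (fst x - \<tau>) * (norm (snd x))\<^sup>2) *\<^sub>R leray (snd x) (g \<tau> (snd x))))
     \<in> borel_measurable ?M"
    by (rule measurable_cong[THEN iffD1, OF _ m8]) (auto simp: indicator_def split_beta')
  from lborel.borel_measurable_lebesgue_integral[OF this]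
  show ?thesis unfolding duhamel_hat_def set_lebesgue_integral_def by (simp add: split_beta')
qed

lemma adm_cont: "admissible_cutoff chi \<Longrightarrow> continuous_on UNIV chi"
  unfolding admissible_cutoff_def smooth_def by (metis Ck.simps(1))

lemma phi_measurable[measurable]: "admissible_cutoff chi \<Longrightarrow> phi_j chi j \<in> borel_measurable borel"
proof -
  assume a: "admissible_cutoff chi"
  have "continuous_on UNIV (phi_j chi j)"
    unfolding phi_j_def[abs_def]
    by (intro continuous_intros continuous_on_compose2[OF adm_cont[OF a]]) auto
  then show ?thesis by (rule borel_measurable_continuous_onI)
qed

lemma phi_support:
  assumes a: "admissible_cutoff chi" and nz: "phi_j chi j \<xi> \<noteq> 0"
  shows "norm \<xi> \<ge> 3/4 * 2 powr real_of_int j"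
proof (rule ccontr)
  assume "\<not> ?thesis"
  hence lt: "norm \<xi> < 3/4 * 2 powr real_of_int j" by simp
  have one: "chi \<xi>' = 1" if "norm \<xi>' \<le> 3/4" for \<xi>' using a that unfolding admissible_cutoff_def by blast
  have e: "2 powr (- real_of_int j) * 2 powr real_of_int j = 1" by (simp add: powr_add[symmetric])
  have "2 powr (- real_of_int j) * norm \<xi> \<le> 2 powr (- real_of_int j) * (3/4 * 2 powr real_of_int j)"
    using lt by (intro mult_left_mono) auto
  also have "\<dots> = 3/4" using e by (simp add: algebra_simps)
  finally have n1: "norm ((2 powr (- real_of_int j)) *\<^sub>R \<xi>) \<le> 3/4" by simp
  have "norm ((2 powr (- real_of_int j) / 2) *\<^sub>R \<xi>) \<le> norm ((2 powr (- real_of_int j)) *\<^sub>R \<xi>)"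
    by simp
  hence n2: "norm ((2 powr (- real_of_int j) / 2) *\<^sub>R \<xi>) \<le> 3/4" using n1 by linarith
  have "phi_j chi j \<xi> = 0" unfolding phi_j_def using one[OF n1] one[OF n2] by simp
  with nz show False by simp
qed

definition kap :: "int \<Rightarrow> real" where "kap j = 9/16 * (2 powr real_of_int j)\<^sup>2"

lemma kap_pos: "kap j > 0" unfolding kap_def by simp

lemma phi_kap:
  assumes a: "admissible_cutoff chi" and nz: "phi_j chi j \<xi> \<noteq> 0"
  shows "(norm \<xi>)\<^sup>2 \<ge> kap j"
proof -
  have "(3/4 * 2 powr real_of_int j)\<^sup>2 \<le> (norm \<xi>)\<^sup>2"
    using phi_support[OF a nz] by (intro power_mono) auto
  moreover have "(3/4 * 2 powr real_of_int j)\<^sup>2 = kap j" unfolding kap_def by (simp add: power2_eq_square)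
  ultimately show ?thesis by linarith
qed

lemma g_slice_measurable:
  fixes g :: "real \<Rightarrow> real^3 \<Rightarrow> complex^3" and \<tau> :: real and \<xi> :: "real^3"
  assumes gm: "(\<lambda>z. g (fst z) (snd z)) \<in> borel_measurable (lborel \<Otimes>\<^sub>M lborel)"
  shows "(\<lambda>\<tau>. g \<tau> \<xi>) \<in> borel_measurable lborel" "(\<lambda>\<xi>. g \<tau> \<xi>) \<in> borel_measurable lborel"
proof -
  have "(\<lambda>\<tau>::real. (\<tau>, \<xi>)) \<in> measurable lborel (lborel \<Otimes>\<^sub>M lborel)"
    by (intro measurable_Pair measurable_ident_sets measurable_const) auto
  from measurable_compose[OF this gm] show "(\<lambda>\<tau>. g \<tau> \<xi>) \<in> borel_measurable lborel" by simp
  have "(\<lambda>\<xi>::real^3. (\<tau>, \<xi>)) \<in> measurable lborel (lborel \<Otimes>\<^sub>M lborel)"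
    by (intro measurable_Pair measurable_ident_sets measurable_const) auto
  from measurable_compose[OF this gm] show "(\<lambda>\<xi>. g \<tau> \<xi>) \<in> borel_measurable lborel" by simp
qed

lemma duh_bound:
  assumes a: "admissible_cutoff chi"
    and gm: "(\<lambda>z. g (fst z) (snd z)) \<in> borel_measurable (lborel \<Otimes>\<^sub>M lborel)"
  shows "ennreal (\<bar>phi_j chi j \<xi>\<bar> * norm (duhamel_hat g t \<xi>)) \<le>
    (\<integral>\<^sup>+ \<tau>. ennreal (12 * indicator {0..t} \<tau> * exp (- (t - \<tau>) * kap j) * (\<bar>phi_j chi j \<xi>\<bar> * norm (g \<tau> \<xi>))) \<partial>lborel)"
proof (cases "phi_j chi j \<xi> = 0")
  case True then show ?thesis by simp
next
  case False
  have gs[measurable]: "(\<lambda>\<tau>. g \<tau> \<xi>) \<in> borel_measurable lborel" using g_slice_measurable[OF gm] by blast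
  define f where "f \<tau> = indicator {0..t} \<tau> *\<^sub>R (exp (- (t - \<tau>) * (norm \<xi>)\<^sup>2) *\<^sub>R leray \<xi> (g \<tau> \<xi>))" for \<tau>
  have "norm (duhamel_hat g t \<xi>) \<le> (\<integral>\<^sup>+ \<tau>. norm (f \<tau>) \<partial>lborel)"
  proof (cases "integrable lborel f")
    case True
    then show ?thesis unfolding duhamel_hat_def set_lebesgue_integral_def f_def[symmetric]
      by (rule integral_norm_bound_ennreal)
  next
    case False
    then show ?thesis unfolding duhamel_hat_def set_lebesgue_integral_def f_def[symmetric]
      by (simp add: not_integrable_integral_eq)
  qed
  also have "\<dots> \<le> (\<integral>\<^sup>+ \<tau>. ennreal (12 * indicator {0..t} \<tau> * exp (- (t - \<tau>) * kap j) * norm (g \<tau> \<xi>)) \<partial>lborel)"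
  proof (intro nn_integral_mono ennreal_leI)
    fix \<tau>
    show "norm (f \<tau>) \<le> 12 * indicator {0..t} \<tau> * exp (- (t - \<tau>) * kap j) * norm (g \<tau> \<xi>)"
    proof (cases "\<tau> \<in> {0..t}")
      case True
      have "(t - \<tau>) * kap j \<le> (t - \<tau>) * (norm \<xi>)\<^sup>2"
        using True phi_kap[OF a False] by (intro mult_left_mono) auto
      hence "- (t - \<tau>) * (norm \<xi>)\<^sup>2 \<le> - (t - \<tau>) * kap j" by linarith
      hence "exp (- (t - \<tau>) * (norm \<xi>)\<^sup>2) \<le> exp (- (t - \<tau>) * kap j)" by (subst exp_le_cancel_iff)
      hence "exp (- (t - \<tau>) * (norm \<xi>)\<^sup>2) * norm (leray \<xi> (g \<tau> \<xi>)) \<le> exp (- (t - \<tau>) * kap j) * (12 * norm (g \<tau> \<xi>))"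
        by (intro mult_mono leray_bound) auto
      then show ?thesis using True unfolding f_def by (simp add: mult_ac)
    next
      case False then show ?thesis unfolding f_def by simp
    qed
  qed
  finally have n: "ennreal (norm (duhamel_hat g t \<xi>)) \<le> (\<integral>\<^sup>+ \<tau>. ennreal (12 * indicator {0..t} \<tau> * exp (- (t - \<tau>) * kap j) * norm (g \<tau> \<xi>)) \<partial>lborel)" .
  have "ennreal (\<bar>phi_j chi j \<xi>\<bar> * norm (duhamel_hat g t \<xi>)) = ennreal \<bar>phi_j chi j \<xi>\<bar> * ennreal (norm (duhamel_hat g t \<xi>))"
    by (rule ennreal_mult') simp
  also have "\<dots> \<le> ennreal \<bar>phi_j chi j \<xi>\<bar> * (\<integral>\<^sup>+ \<tau>. ennreal (12 * indicator {0..t} \<tau> * exp (- (t - \<tau>) * kap j) * norm (g \<tau> \<xi>)) \<partial>lborel)"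
    by (intro mult_left_mono n) auto
  also have "\<dots> = (\<integral>\<^sup>+ \<tau>. ennreal \<bar>phi_j chi j \<xi>\<bar> * ennreal (12 * indicator {0..t} \<tau> * exp (- (t - \<tau>) * kap j) * norm (g \<tau> \<xi>)) \<partial>lborel)"
    by (subst nn_integral_cmult) auto
  also have "\<dots> = (\<integral>\<^sup>+ \<tau>. ennreal (12 * indicator {0..t} \<tau> * exp (- (t - \<tau>) * kap j) * (\<bar>phi_j chi j \<xi>\<bar> * norm (g \<tau> \<xi>))) \<partial>lborel)"
    by (intro nn_integral_cong) (simp add: ennreal_mult'[symmetric] mult_ac)
  finally show ?thesis .
qed

lemma spatial_step:
  fixes g :: "real \<Rightarrow> real^3 \<Rightarrow> complex^3" and P W :: "real^3 \<Rightarrow> real"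
  assumes a: "admissible_cutoff chi"
    and gm[measurable]: "(\<lambda>z. g (fst z) (snd z)) \<in> borel_measurable (lborel \<Otimes>\<^sub>M lborel)"
    and P1: "\<And>\<xi>. P \<xi> \<ge> 1" and Pm[measurable]: "P \<in> borel_measurable lborel"
    and W0: "\<And>\<xi>. W \<xi> \<ge> 0" and Wm[measurable]: "W \<in> borel_measurable lborel"
    and s0: "s0 \<ge> 0"
  shows "lux lborel P (\<lambda>\<xi>. s0 * W \<xi> * norm (phi_j chi j \<xi> *\<^sub>R duhamel_hat g t \<xi>))
     \<le> (\<integral>\<^sup>+ \<tau>. ennreal (12 * s0 * indicator {0..t} \<tau> * exp (- (t - \<tau>) * kap j)) *
            lux lborel P (\<lambda>\<xi>. W \<xi> * norm (phi_j chi j \<xi> *\<^sub>R g \<tau> \<xi>)) \<partial>lborel)"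
proof -
  have P0: "\<And>\<xi>. P \<xi> \<ge> 0" using P1 by (meson order.trans zero_le_one)
  have phm[measurable]: "phi_j chi j \<in> borel_measurable lborel" using phi_measurable[OF a] by simp
  define H where "H \<tau> \<xi> = (12 * s0 * indicator {0..t} \<tau> * exp (- (t - \<tau>) * kap j)) * (W \<xi> * norm (phi_j chi j \<xi> *\<^sub>R g \<tau> \<xi>))"
    for \<tau> :: real and \<xi> :: "real^3"
  have Hm: "(\<lambda>z. H (fst z) (snd z)) \<in> borel_measurable (lborel \<Otimes>\<^sub>M lborel)"
    unfolding H_def by measurable
  have H0: "H \<tau> \<xi> \<ge> 0" for \<tau> \<xi> unfolding H_def using s0 W0 by simp
  have FH: "ennreal \<bar>s0 * W \<xi> * norm (phi_j chi j \<xi> *\<^sub>R duhamel_hat g t \<xi>)\<bar> \<le> (\<integral>\<^sup>+ \<tau>. ennreal (H \<tau> \<xi>) \<partial>lborel)" for \<xi>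
  proof -
    have gs[measurable]: "(\<lambda>\<tau>. g \<tau> \<xi>) \<in> borel_measurable lborel" using g_slice_measurable[OF gm] by blast
    have "ennreal \<bar>s0 * W \<xi> * norm (phi_j chi j \<xi> *\<^sub>R duhamel_hat g t \<xi>)\<bar>
        = ennreal (s0 * W \<xi>) * ennreal (\<bar>phi_j chi j \<xi>\<bar> * norm (duhamel_hat g t \<xi>))"
      using s0 W0[of \<xi>] by (simp add: ennreal_mult'[symmetric] mult_ac)
    also have "\<dots> \<le> ennreal (s0 * W \<xi>) * (\<integral>\<^sup>+ \<tau>. ennreal (12 * indicator {0..t} \<tau> * exp (- (t - \<tau>) * kap j) * (\<bar>phi_j chi j \<xi>\<bar> * norm (g \<tau> \<xi>))) \<partial>lborel)"
      by (intro mult_left_mono duh_bound[OF a gm]) auto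
    also have "\<dots> = (\<integral>\<^sup>+ \<tau>. ennreal (s0 * W \<xi>) * ennreal (12 * indicator {0..t} \<tau> * exp (- (t - \<tau>) * kap j) * (\<bar>phi_j chi j \<xi>\<bar> * norm (g \<tau> \<xi>))) \<partial>lborel)"
      by (subst nn_integral_cmult) auto
    also have "\<dots> = (\<integral>\<^sup>+ \<tau>. ennreal (H \<tau> \<xi>) \<partial>lborel)"
      using s0 W0[of \<xi>] by (intro nn_integral_cong) (simp add: H_def ennreal_mult'[symmetric] mult_ac)
    finally show ?thesis .
  qed
  have "lux lborel P (\<lambda>\<xi>. s0 * W \<xi> * norm (phi_j chi j \<xi> *\<^sub>R duhamel_hat g t \<xi>)) \<le> (\<integral>\<^sup>+ \<tau>. lux lborel P (H \<tau>) \<partial>lborel)"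
    by (rule minkowski_lux[OF P1 Pm Hm H0 FH])
  also have "\<dots> \<le> (\<integral>\<^sup>+ \<tau>. ennreal (12 * s0 * indicator {0..t} \<tau> * exp (- (t - \<tau>) * kap j)) *
            lux lborel P (\<lambda>\<xi>. W \<xi> * norm (phi_j chi j \<xi> *\<^sub>R g \<tau> \<xi>)) \<partial>lborel)"
    unfolding H_def using s0 P0 by (intro nn_integral_mono lux_cmult_le) auto
  finally show ?thesis .
qed

lemma indicator_Icc_measurable[measurable]:
  fixes f h :: "'a \<Rightarrow> real"
  assumes [measurable]: "f \<in> borel_measurable M" "h \<in> borel_measurable M"
  shows "(\<lambda>x. indicator {0..f x} (h x) :: real) \<in> borel_measurable M"
proof -
  have "(\<lambda>x. if 0 \<le> h x \<and> h x \<le> f x then 1 else 0 :: real) \<in> borel_measurable M" by measurable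
  then show ?thesis by (rule measurable_cong[THEN iffD1, rotated]) (auto simp: indicator_def)
qed

lemma K_le: "s0 \<ge> 0 \<Longrightarrow> 12 * s0 * indicator {0..t} \<tau> * exp (- (t - \<tau>) * kap j) \<le> 12 * s0"
proof (cases "\<tau> \<in> {0..t}")
  case True
  assume s0: "s0 \<ge> 0"
  have "(t - \<tau>) * kap j \<ge> 0" using True kap_pos[of j] by simp
  hence "- (t - \<tau>) * kap j \<le> 0" by linarith
  hence "exp (- (t - \<tau>) * kap j) \<le> 1" by (simp only: exp_le_one_iff)
  then show ?thesis using True s0 by (simp add: mult_left_le)
qed simp

lemma time_inf:
  fixes N a :: "real \<Rightarrow> ennreal"
  assumes Nm: "N \<in> borel_measurable lborel" and am[measurable]: "a \<in> borel_measurable lborel"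
    and bound: "\<And>t. N t \<le> (\<integral>\<^sup>+ \<tau>. ennreal (12 * 1 * indicator {0..t} \<tau> * exp (- (t - \<tau>) * kap j)) * a \<tau> \<partial>lborel)"
  shows "Lt_norm \<top> N \<le> ennreal 12 * Lt_norm 1 a"
proof -
  have b: "N t \<le> ennreal 12 * Lt_norm 1 a" for t
  proof -
    have "N t \<le> (\<integral>\<^sup>+ \<tau>. ennreal (12 * 1 * indicator {0..t} \<tau> * exp (- (t - \<tau>) * kap j)) * a \<tau> \<partial>lborel)"
      by (rule bound)
    also have "\<dots> \<le> (\<integral>\<^sup>+ \<tau>. ennreal 12 * (a \<tau> * indicator {0<..} \<tau>) \<partial>lborel)"
    proof (rule nn_integral_mono_AE)
      show "AE \<tau> in lborel. ennreal (12 * 1 * indicator {0..t} \<tau> * exp (- (t - \<tau>) * kap j)) * a \<tau> \<le> ennreal 12 * (a \<tau> * indicator {0<..} \<tau>)"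
        using AE_lborel_singleton[of 0]
      proof (rule AE_mp, intro AE_I2 impI)
        fix \<tau> :: real assume "\<tau> \<noteq> 0"
        show "ennreal (12 * 1 * indicator {0..t} \<tau> * exp (- (t - \<tau>) * kap j)) * a \<tau> \<le> ennreal 12 * (a \<tau> * indicator {0<..} \<tau>)"
        proof (cases "\<tau> \<in> {0..t}")
          case True
          hence "\<tau> > 0" using \<open>\<tau> \<noteq> 0\<close> by auto
          have "ennreal (12 * 1 * indicator {0..t} \<tau> * exp (- (t - \<tau>) * kap j)) \<le> ennreal 12"
            using K_le[of 1 t \<tau> j] by (intro ennreal_leI) auto
          then show ?thesis using \<open>\<tau> > 0\<close> by (auto intro: mult_right_mono)
        qed simp
      qed
    qed
    also have "\<dots> = ennreal 12 * Lt_norm 1 a" unfolding Lt_norm_1 by (subst nn_integral_cmult) auto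
    finally show ?thesis .
  qed
  have "Lt_norm \<top> N = esssup (restrict_space lborel {0<..}) N" unfolding Lt_norm_def by simp
  also have "\<dots> \<le> ennreal 12 * Lt_norm 1 a"
  proof (rule esssup_I)
    show "N \<in> borel_measurable (restrict_space lborel {0<..})" by (rule measurable_restrict_space1[OF Nm])
    show "AE x in restrict_space lborel {0<..}. N x \<le> ennreal 12 * Lt_norm 1 a" by (intro AE_I2 b)
  qed
  finally show ?thesis .
qed

lemma exp_powr_real: "exp (x::real) powr r = exp (x * r)"
proof -
  have "exp x powr r = exp (r * x)" by (simp add: powr_def)
  then show ?thesis by (simp add: mult.commute)
qed

lemma lux_kernel:
  assumes r: "r \<ge> 1"
  shows "lux lborel (\<lambda>_. r) (\<lambda>t. indicator {\<tau>..} t * exp (- (t - \<tau>) * kap j)) = ennreal ((1 / (kap j * r)) powr (1/r))"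
proof -
  have "lux lborel (\<lambda>_. r) (\<lambda>t. indicator {\<tau>..} t * exp (- (t - \<tau>) * kap j))
      = enn_powr (\<integral>\<^sup>+ t. ennreal (\<bar>indicator {\<tau>..} t * exp (- (t - \<tau>) * kap j)\<bar> powr r) \<partial>lborel) (1/r)"
    using r by (intro lux_const) auto
  also have "(\<integral>\<^sup>+ t. ennreal (\<bar>indicator {\<tau>..} t * exp (- (t - \<tau>) * kap j)\<bar> powr r) \<partial>lborel)
      = (\<integral>\<^sup>+ t. ennreal (indicator {\<tau>..} t * exp (- (t - \<tau>) * (kap j * r))) \<partial>lborel)"
    using r by (intro nn_integral_cong) (auto simp: indicator_def exp_powr_real mult_ac)
  also have "\<dots> = ennreal (1 / (kap j * r))" using r kap_pos[of j] by (intro exp_integral) auto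
  finally show ?thesis unfolding enn_powr_def using r kap_pos[of j] by simp
qed

lemma time_fin:
  fixes N a :: "real \<Rightarrow> ennreal"
  assumes r: "r \<ge> 1" and am[measurable]: "a \<in> borel_measurable lborel" and s0: "s0 > 0"
    and bound: "\<And>t. N t \<le> (\<integral>\<^sup>+ \<tau>. ennreal (12 * s0 * indicator {0..t} \<tau> * exp (- (t - \<tau>) * kap j)) * a \<tau> \<partial>lborel)"
  shows "Lt_norm (ennreal r) N \<le> ennreal (12 * s0 * (1 / (kap j * r)) powr (1/r)) * Lt_norm 1 a"
proof -
  define Cst where "Cst = 12 * s0 * (1 / (kap j * r)) powr (1/r)"
  have Cst0: "Cst > 0" unfolding Cst_def using s0 r kap_pos[of j] by simp
  define A where "A = Lt_norm 1 a"
  have A_eq: "A = (\<integral>\<^sup>+ \<tau>. a \<tau> * indicator {0<..} \<tau> \<partial>lborel)" unfolding A_def Lt_norm_1 ..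
  define K where "K t \<tau> = 12 * s0 * indicator {0..t} \<tau> * exp (- (t - \<tau>) * kap j)" for t \<tau> :: real
  have K0: "K t \<tau> \<ge> 0" for t \<tau> unfolding K_def using s0 by simp
  have Kle: "K t \<tau> \<le> 12 * s0" for t \<tau> unfolding K_def using K_le s0 by simp
  show ?thesis
  proof (cases "A = \<top>")
    case True
    then show ?thesis using Cst0 unfolding A_def Cst_def[symmetric] by simp
  next
    case False
    have AEa: "AE \<tau> in lborel. a \<tau> * indicator {0<..} \<tau> \<noteq> \<top>"
      using nn_integral_PInf_AE[of "\<lambda>\<tau>. a \<tau> * indicator {0<..} \<tau>" lborel] False A_eq by simp
    define a2 where "a2 \<tau> = enn2real (a \<tau>) * indicator {0<..} \<tau>" for \<tau> :: real
    have a2m[measurable]: "a2 \<in> borel_measurable lborel" unfolding a2_def by measurable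
    have a20: "a2 \<tau> \<ge> 0" for \<tau> unfolding a2_def by simp
    have a2_eq: "AE \<tau> in lborel. ennreal (a2 \<tau>) = a \<tau> * indicator {0<..} \<tau>"
      using AEa
    proof (rule AE_mp, intro AE_I2 impI)
      fix \<tau> :: real assume h: "a \<tau> * indicator {0<..} \<tau> \<noteq> \<top>"
      show "ennreal (a2 \<tau>) = a \<tau> * indicator {0<..} \<tau>"
      proof (cases "\<tau> > 0")
        case True then show ?thesis using h unfolding a2_def by (simp add: less_top)
      qed (simp add: a2_def)
    qed
    have int_a2: "(\<integral>\<^sup>+ \<tau>. ennreal (a2 \<tau>) \<partial>lborel) = A"
      unfolding A_eq by (rule nn_integral_cong_AE[OF a2_eq])
    define B where "B t = (\<integral>\<^sup>+ \<tau>. ennreal (K t \<tau> * a2 \<tau>) \<partial>lborel)" for t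
    have NB: "N t \<le> B t" for t
    proof -
      have "N t \<le> (\<integral>\<^sup>+ \<tau>. ennreal (K t \<tau>) * a \<tau> \<partial>lborel)" using bound[of t] unfolding K_def .
      also have "\<dots> \<le> B t" unfolding B_def
      proof (rule nn_integral_mono_AE)
        show "AE \<tau> in lborel. ennreal (K t \<tau>) * a \<tau> \<le> ennreal (K t \<tau> * a2 \<tau>)"
          using AE_lborel_singleton[of 0] a2_eq
        proof (eventually_elim)
          case (elim \<tau>)
          show ?case
          proof (cases "\<tau> \<in> {0..t}")
            case True
            hence "\<tau> > 0" using elim by auto
            then have "a \<tau> = ennreal (a2 \<tau>)" using elim by simp
            then show ?thesis using K0[of t \<tau>] a20[of \<tau>] by (simp add: ennreal_mult')
          next
            case False then show ?thesis unfolding K_def by simp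
          qed
        qed
      qed
      finally show ?thesis .
    qed
    have Bfin: "B t \<le> ennreal (12 * s0) * A" for t
    proof -
      have "B t \<le> (\<integral>\<^sup>+ \<tau>. ennreal (12 * s0) * ennreal (a2 \<tau>) \<partial>lborel)"
        unfolding B_def using Kle a20 s0
        by (intro nn_integral_mono) (simp add: ennreal_mult'[symmetric] mult_right_mono)
      also have "\<dots> = ennreal (12 * s0) * A" by (subst nn_integral_cmult) (auto simp: int_a2)
      finally show ?thesis .
    qed
    have Bnt: "B t \<noteq> \<top>" for t
    proof -
      have "ennreal (12 * s0) * A < \<top>" using False by (simp add: less_top ennreal_mult_less_top)
      then show ?thesis using Bfin[of t] by (metis top.not_eq_extremum leD)
    qed
    define b where "b t = enn2real (B t)" for t
    have Bb: "B t = ennreal (b t)" for t unfolding b_def using Bnt[of t] by (simp add: less_top)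
    have b0: "b t \<ge> 0" for t unfolding b_def by simp
    have Km[measurable]: "(\<lambda>z. K (fst z) (snd z)) \<in> borel_measurable (lborel \<Otimes>\<^sub>M lborel)"
      unfolding K_def by measurable
    have Bm: "B \<in> borel_measurable lborel"
    proof -
      have "(\<lambda>z. ennreal (K (fst z) (snd z) * a2 (snd z))) \<in> borel_measurable (lborel \<Otimes>\<^sub>M lborel)" by measurable
      from lborel.borel_measurable_nn_integral[of "\<lambda>t \<tau>. ennreal (K t \<tau> * a2 \<tau>)" lborel] this
      show ?thesis unfolding B_def by (simp add: split_beta')
    qed
    have bm[measurable]: "b \<in> borel_measurable lborel" unfolding b_def using Bm by measurable
    have "Lt_norm (ennreal r) N \<le> Lt_norm (ennreal r) (\<lambda>t. ennreal (b t))"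
      using NB Bb by (intro Lt_norm_mono_fin) auto
    also have "\<dots> = lux lborel (\<lambda>_. r) (\<lambda>t. b t * indicator {0<..} t)"
      using r b0 by (intro Lt_lux) auto
    also have "\<dots> \<le> (\<integral>\<^sup>+ \<tau>. lux lborel (\<lambda>_. r) (\<lambda>t. a2 \<tau> * (K t \<tau> * indicator {0<..} t)) \<partial>lborel)"
    proof (rule minkowski_lux[where H="\<lambda>\<tau> t. a2 \<tau> * (K t \<tau> * indicator {0<..} t)"])
      show "1 \<le> r" using r .
      show "(\<lambda>_. r) \<in> borel_measurable lborel" by simp
      show "(\<lambda>z. a2 (fst z) * (K (snd z) (fst z) * indicator {0<..} (snd z))) \<in> borel_measurable (lborel \<Otimes>\<^sub>M lborel)"
        unfolding K_def by measurable
      show "0 \<le> a2 \<tau> * (K t \<tau> * indicator {0<..} t)" for \<tau> t using a20 K0 by simp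
      show "ennreal \<bar>b t * indicator {0<..} t\<bar> \<le> (\<integral>\<^sup>+ \<tau>. ennreal (a2 \<tau> * (K t \<tau> * indicator {0<..} t)) \<partial>lborel)" for t
      proof (cases "t > 0")
        case True
        have "ennreal \<bar>b t * indicator {0<..} t\<bar> = B t" using True b0[of t] Bb[of t] by simp
        also have "\<dots> = (\<integral>\<^sup>+ \<tau>. ennreal (a2 \<tau> * (K t \<tau> * indicator {0<..} t)) \<partial>lborel)"
          unfolding B_def using True by (simp add: mult.commute)
        finally show ?thesis by simp
      qed simp
    qed
    also have "\<dots> \<le> (\<integral>\<^sup>+ \<tau>. ennreal (a2 \<tau>) * ennreal Cst \<partial>lborel)"
    proof (rule nn_integral_mono)
      fix \<tau>
      have "lux lborel (\<lambda>_. r) (\<lambda>t. a2 \<tau> * (K t \<tau> * indicator {0<..} t))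
          \<le> ennreal (a2 \<tau>) * lux lborel (\<lambda>_. r) (\<lambda>t. K t \<tau> * indicator {0<..} t)"
        using a20 r by (intro lux_cmult_le) auto
      also have "lux lborel (\<lambda>_. r) (\<lambda>t. K t \<tau> * indicator {0<..} t)
          \<le> lux lborel (\<lambda>_. r) (\<lambda>t. (12 * s0) * (indicator {\<tau>..} t * exp (- (t - \<tau>) * kap j)))"
      proof (rule lux_mono)
        fix t
        show "\<bar>K t \<tau> * indicator {0<..} t\<bar> \<le> \<bar>12 * s0 * (indicator {\<tau>..} t * exp (- (t - \<tau>) * kap j))\<bar>"
          unfolding K_def using s0 by (auto simp: indicator_def)
      qed (use r in auto)
      also have "\<dots> \<le> ennreal (12 * s0) * lux lborel (\<lambda>_. r) (\<lambda>t. indicator {\<tau>..} t * exp (- (t - \<tau>) * kap j))"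
        using s0 r by (intro lux_cmult_le) auto
      also have "\<dots> = ennreal Cst"
        unfolding lux_kernel[OF r] Cst_def using s0 by (simp add: ennreal_mult'[symmetric])
      finally show "lux lborel (\<lambda>_. r) (\<lambda>t. a2 \<tau> * (K t \<tau> * indicator {0<..} t)) \<le> ennreal (a2 \<tau>) * ennreal Cst"
        by (simp add: mult_left_mono)
    qed
    also have "\<dots> = ennreal Cst * A"
      by (subst nn_integral_multc) (auto simp: int_a2 mult.commute)
    finally show ?thesis unfolding Cst_def A_def .
  qed
qed

lemma const_bound:
  assumes r: "r \<ge> 1"
  shows "12 * 2 powr (real_of_int j * 2 * (1/r)) * (1 / (kap j * r)) powr (1/r) \<le> 22"
proof -
  have k: "kap j * r = (9 * r / 16) * 2 powr (2 * real_of_int j)"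
    unfolding kap_def by (simp add: power2_eq_square powr_add[symmetric])
  have e0: "(1 / (kap j * r)) = (16 / (9 * r)) * 2 powr (- (2 * real_of_int j))"
    unfolding k using r by (simp add: powr_minus field_simps)
  have "(1 / (kap j * r)) powr (1/r) = ((16 / (9 * r)) * 2 powr (- (2 * real_of_int j))) powr (1/r)"
    by (simp only: e0)
  also have "\<dots> = (16 / (9 * r)) powr (1/r) * (2 powr (- (2 * real_of_int j))) powr (1/r)"
    by (rule powr_mult)
  also have "(2 powr (- (2 * real_of_int j))) powr (1/r) = 2 powr (- (2 * real_of_int j) * (1/r))"
    by (rule powr_powr)
  finally have "(1 / (kap j * r)) powr (1/r) = (16 / (9 * r)) powr (1/r) * 2 powr (- (2 * real_of_int j) * (1/r))" .
  hence "2 powr (real_of_int j * 2 * (1/r)) * (1 / (kap j * r)) powr (1/r) = (16 / (9 * r)) powr (1/r)"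
    by (simp add: powr_add[symmetric] mult_ac)
  also have "\<dots> \<le> (16 / 9) powr (1/r)"
    using r by (intro powr_mono2) (auto simp: field_simps)
  also have "\<dots> \<le> (16 / 9) powr 1"
    using r by (intro powr_mono) auto
  also have "(16 / 9 :: real) powr 1 = 16 / 9" by simp
  finally have h: "2 powr (real_of_int j * 2 * (1/r)) * (1 / (kap j * r)) powr (1/r) \<le> 16/9" .
  have "12 * (2 powr (real_of_int j * 2 * (1/r)) * (1 / (kap j * r)) powr (1/r)) \<le> 12 * (16/9)"
    using h by (rule mult_left_mono) simp
  then show ?thesis unfolding mult.assoc by linarith
qed

lemma zsum_mono_cmult:
  assumes "\<And>j. f j \<le> c * h j"
  shows "zsum f \<le> c * zsum h"
  unfolding zsum_def
proof -
  have "(SUP n::nat. \<Sum>j\<in>{- int n..int n}. f j) \<le> (SUP n::nat. c * (\<Sum>j\<in>{- int n..int n}. h j))"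
    by (intro SUP_mono) (auto intro!: sum_mono assms simp: sum_distrib_left)
  also have "\<dots> = c * (SUP n::nat. \<Sum>j\<in>{- int n..int n}. h j)"
    by (rule SUP_mult_left_ennreal[symmetric])
  finally show "(SUP n::nat. \<Sum>j\<in>{- int n..int n}. f j) \<le> c * (SUP n::nat. \<Sum>j\<in>{- int n..int n}. h j)" .
qed

lemma core:
  fixes g :: "real \<Rightarrow> real^3 \<Rightarrow> complex^3" and P W :: "real^3 \<Rightarrow> real" and \<rho> :: ennreal
  assumes a: "admissible_cutoff chi"
    and gm[measurable]: "(\<lambda>z. g (fst z) (snd z)) \<in> borel_measurable (lborel \<Otimes>\<^sub>M lborel)"
    and P1: "\<And>\<xi>. P \<xi> \<ge> 1" and Pm[measurable]: "P \<in> borel_measurable lborel"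
    and W0: "\<And>\<xi>. W \<xi> \<ge> 0" and Wm[measurable]: "W \<in> borel_measurable lborel"
    and \<rho>1: "1 \<le> \<rho>"
  shows "Lt_norm \<rho> (\<lambda>t. lux lborel P (\<lambda>\<xi>. 2 powr (real_of_int j * 2 * inv_exp \<rho>) * W \<xi> * norm (phi_j chi j \<xi> *\<^sub>R duhamel_hat g t \<xi>)))
     \<le> ennreal 22 * Lt_norm 1 (\<lambda>\<tau>. lux lborel P (\<lambda>\<xi>. W \<xi> * norm (phi_j chi j \<xi> *\<^sub>R g \<tau> \<xi>)))"
proof -
  have P0: "\<And>\<xi>. P \<xi> \<ge> 0" using P1 by (meson order.trans zero_le_one)
  have phm[measurable]: "phi_j chi j \<in> borel_measurable lborel" using phi_measurable[OF a] by simp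
  have um[measurable]: "(\<lambda>z. duhamel_hat g (fst z) (snd z)) \<in> borel_measurable (lborel \<Otimes>\<^sub>M lborel)"
    by (rule duhamel_measurable[OF gm])
  define s0 where "s0 = 2 powr (real_of_int j * 2 * inv_exp \<rho>)"
  have s0p: "s0 > 0" unfolding s0_def by simp
  define a' where "a' \<tau> = lux lborel P (\<lambda>\<xi>. W \<xi> * norm (phi_j chi j \<xi> *\<^sub>R g \<tau> \<xi>))" for \<tau>
  have am[measurable]: "a' \<in> borel_measurable lborel" unfolding a'_def
    by (rule lux_measurable[OF P0 Pm]) measurable
  define N where "N t = lux lborel P (\<lambda>\<xi>. s0 * W \<xi> * norm (phi_j chi j \<xi> *\<^sub>R duhamel_hat g t \<xi>))" for t
  have Nm: "N \<in> borel_measurable lborel" unfolding N_def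
    by (rule lux_measurable[OF P0 Pm]) measurable
  have bound: "N t \<le> (\<integral>\<^sup>+ \<tau>. ennreal (12 * s0 * indicator {0..t} \<tau> * exp (- (t - \<tau>) * kap j)) * a' \<tau> \<partial>lborel)" for t
    unfolding N_def a'_def using s0p by (intro spatial_step[OF a gm P1 Pm W0 Wm]) auto
  show ?thesis
  proof (cases "\<rho> = \<top>")
    case True
    hence s1: "s0 = 1" unfolding s0_def inv_exp_def by simp
    have "Lt_norm \<rho> N \<le> ennreal 12 * Lt_norm 1 a'"
      unfolding True by (rule time_inf[OF Nm am]) (use bound s1 in simp)
    also have "\<dots> \<le> ennreal 22 * Lt_norm 1 a'" by (intro mult_right_mono ennreal_leI) auto
    finally show ?thesis unfolding N_def a'_def s0_def .
  next
    case False
    then obtain r where r: "\<rho> = ennreal r" "r \<ge> 0" by (cases \<rho> rule: ennreal_cases) auto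
    have r1: "r \<ge> 1" using \<rho>1 r by (simp add: ennreal_1[symmetric] del: ennreal_1)
    have inv: "inv_exp \<rho> = 1 / r" unfolding inv_exp_def using r by simp
    have "Lt_norm (ennreal r) N \<le> ennreal (12 * s0 * (1 / (kap j * r)) powr (1/r)) * Lt_norm 1 a'"
      by (rule time_fin[OF r1 am s0p bound])
    also have "\<dots> \<le> ennreal 22 * Lt_norm 1 a'"
      using const_bound[OF r1, of j] unfolding s0_def inv
      by (intro mult_right_mono ennreal_leI) (auto simp: mult.assoc)
    finally show ?thesis unfolding N_def a'_def s0_def r(1) .
  qed
qed

lemma powr_split: "(2::real) powr (x * (s + 2 * i)) = 2 powr (x * 2 * i) * 2 powr (x * s)"
  by (simp add: powr_add[symmetric] algebra_simps)

lemma Lt1_cmult: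
  assumes "N \<in> borel_measurable lborel"
  shows "Lt_norm 1 (\<lambda>t. ennreal c * N t) = ennreal c * Lt_norm 1 N"
  unfolding Lt_norm_1 using assms by (subst nn_integral_cmult[symmetric]) (auto simp: mult.assoc)

theorem lemma4p2:
  fixes chi :: "real^3 \<Rightarrow> real" and p :: "real^3 \<Rightarrow> real" and \<rho> :: ennreal
  assumes "admissible_cutoff chi"
    and "p \<in> P0_log"
    and "2 \<le> ess_inf_r p" and "ess_sup_r p \<le> 6"
    and "1 \<le> \<rho>"
  shows "\<exists>C::real. C > 0 \<and>
    (\<forall>g :: real \<Rightarrow> real^3 \<Rightarrow> complex^3.
       (\<lambda>(t, \<xi>). g t \<xi>) \<in> borel_measurable (lborel \<Otimes>\<^sub>M lborel) \<longrightarrow>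
       CL_var_norm chi 1 (\<lambda>\<xi>. 2 - 3 / p \<xi>) p g < \<top> \<longrightarrow>
       CL_norm chi 1 (1/2) 2 g < \<top> \<longrightarrow>
       X_norm chi p \<rho> (duhamel_hat g)
         \<le> ennreal C * (CL_var_norm chi 1 (\<lambda>\<xi>. 2 - 3 / p \<xi>) p g + CL_norm chi 1 (1/2) 2 g))"
proof -
  note a = assms(1)
  have pP0: "p \<in> P0" using assms(2) unfolding P0_log_def by simp
  have pm[measurable]: "p \<in> borel_measurable lborel" and p1: "\<And>x. 1 \<le> p x"
    using pP0 unfolding P0_def by auto
  have phm[measurable]: "phi_j chi j \<in> borel_measurable lborel" for j using phi_measurable[OF a] by simp
  show ?thesis
  proof (intro exI[of _ 22] conjI allI impI)
    show "(22::real) > 0" by simp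
    fix g :: "real \<Rightarrow> real^3 \<Rightarrow> complex^3"
    assume gm0: "(\<lambda>(t, \<xi>). g t \<xi>) \<in> borel_measurable (lborel \<Otimes>\<^sub>M lborel)"
    have gm[measurable]: "(\<lambda>z. g (fst z) (snd z)) \<in> borel_measurable (lborel \<Otimes>\<^sub>M lborel)"
      using gm0 by (simp add: split_beta')
    have um[measurable]: "(\<lambda>z. duhamel_hat g (fst z) (snd z)) \<in> borel_measurable (lborel \<Otimes>\<^sub>M lborel)"
      by (rule duhamel_measurable[OF gm])
    define V where "V = CL_var_norm chi 1 (\<lambda>\<xi>. 2 - 3 / p \<xi>) p g"
    define L where "L = CL_norm chi 1 (1/2) 2 g"
    have gs: "(\<lambda>\<xi>. g \<tau> \<xi>) \<in> borel_measurable lborel" for \<tau> using g_slice_measurable[OF gm] by blast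
    have us: "(\<lambda>\<xi>. duhamel_hat g t \<xi>) \<in> borel_measurable lborel" for t using g_slice_measurable[OF um] by blast
    have Lp_u: "Lp_norm 2 (\<lambda>\<xi>. norm (phi_j chi j \<xi> *\<^sub>R duhamel_hat g t \<xi>)) = lux lborel (\<lambda>_. 2) (\<lambda>\<xi>. 1 * 1 * norm (phi_j chi j \<xi> *\<^sub>R duhamel_hat g t \<xi>))" for j t
      using us[of t] by (subst Lp_lux) (auto simp: measurable_compose[OF _ borel_measurable_norm])
    have Lp_g: "Lp_norm 2 (\<lambda>\<xi>. norm (phi_j chi j \<xi> *\<^sub>R g t \<xi>)) = lux lborel (\<lambda>_. 2) (\<lambda>\<xi>. 1 * norm (phi_j chi j \<xi> *\<^sub>R g t \<xi>))" for j t
      using gs[of t] by (subst Lp_lux) auto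
    have part1: "CL_var_norm chi \<rho> (\<lambda>\<xi>. 2 - 3 / p \<xi> + 2 * inv_exp \<rho>) p (duhamel_hat g) \<le> ennreal 22 * V"
      unfolding CL_var_norm_def V_def
    proof (rule zsum_mono_cmult)
      fix j
      have "Lt_norm \<rho> (\<lambda>t. Lvar_norm p (\<lambda>\<xi>. 2 powr (real_of_int j * (2 - 3 / p \<xi> + 2 * inv_exp \<rho>)) * norm (phi_j chi j \<xi> *\<^sub>R duhamel_hat g t \<xi>)))
         = Lt_norm \<rho> (\<lambda>t. lux lborel p (\<lambda>\<xi>. 2 powr (real_of_int j * 2 * inv_exp \<rho>) * 2 powr (real_of_int j * (2 - 3 / p \<xi>)) * norm (phi_j chi j \<xi> *\<^sub>R duhamel_hat g t \<xi>)))"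
        unfolding Lvar_lux powr_split ..
      also have "\<dots> \<le> ennreal 22 * Lt_norm 1 (\<lambda>\<tau>. lux lborel p (\<lambda>\<xi>. 2 powr (real_of_int j * (2 - 3 / p \<xi>)) * norm (phi_j chi j \<xi> *\<^sub>R g \<tau> \<xi>)))"
        by (rule core[OF a gm p1 pm _ _ assms(5)]) auto
      finally show "Lt_norm \<rho> (\<lambda>t. Lvar_norm p (\<lambda>\<xi>. 2 powr (real_of_int j * (2 - 3 / p \<xi> + 2 * inv_exp \<rho>)) * norm (phi_j chi j \<xi> *\<^sub>R duhamel_hat g t \<xi>)))
          \<le> ennreal 22 * Lt_norm 1 (\<lambda>t. Lvar_norm p (\<lambda>\<xi>. 2 powr (real_of_int j * (2 - 3 / p \<xi>)) * norm (phi_j chi j \<xi> *\<^sub>R g t \<xi>)))"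
        unfolding Lvar_lux .
    qed
    have part2: "CL_norm chi 1 (5/2) 2 (duhamel_hat g) \<le> ennreal 22 * L"
      unfolding CL_norm_def L_def
    proof (rule zsum_mono_cmult)
      fix j
      define s0 where "s0 = 2 powr (real_of_int j * 2 * inv_exp 1)"
      have s0e: "s0 = 2 powr (real_of_int j * 2)" unfolding s0_def inv_exp_def by simp
      define Nu where "Nu t = Lp_norm 2 (\<lambda>\<xi>. norm (phi_j chi j \<xi> *\<^sub>R duhamel_hat g t \<xi>))" for t
      define Ng where "Ng t = Lp_norm 2 (\<lambda>\<xi>. norm (phi_j chi j \<xi> *\<^sub>R g t \<xi>))" for t
      have Num: "Nu \<in> borel_measurable lborel" unfolding Nu_def Lp_u
        by (rule lux_measurable) measurable
      have "ennreal s0 * Lt_norm 1 Nu = Lt_norm 1 (\<lambda>t. ennreal s0 * Nu t)"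
        by (rule Lt1_cmult[OF Num, symmetric])
      also have "(\<lambda>t. ennreal s0 * Nu t) = (\<lambda>t. lux lborel (\<lambda>_. 2) (\<lambda>\<xi>. s0 * 1 * norm (phi_j chi j \<xi> *\<^sub>R duhamel_hat g t \<xi>)))"
      proof (rule ext)
        fix t
        have s0p: "s0 > 0" unfolding s0_def by simp
        have "lux lborel (\<lambda>_. 2) (\<lambda>\<xi>. s0 * (1 * 1 * norm (phi_j chi j \<xi> *\<^sub>R duhamel_hat g t \<xi>)))
            = ennreal s0 * lux lborel (\<lambda>_. 2) (\<lambda>\<xi>. 1 * 1 * norm (phi_j chi j \<xi> *\<^sub>R duhamel_hat g t \<xi>))"
          using s0p by (intro lux_cmult) auto
        then show "ennreal s0 * Nu t = lux lborel (\<lambda>_. 2) (\<lambda>\<xi>. s0 * 1 * norm (phi_j chi j \<xi> *\<^sub>R duhamel_hat g t \<xi>))"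
          unfolding Nu_def Lp_u by simp
      qed
      also have "Lt_norm 1 \<dots> \<le> ennreal 22 * Lt_norm 1 (\<lambda>\<tau>. lux lborel (\<lambda>_. 2) (\<lambda>\<xi>. 1 * norm (phi_j chi j \<xi> *\<^sub>R g \<tau> \<xi>)))"
        unfolding s0_def by (rule core[OF a gm]) auto
      also have "(\<lambda>\<tau>. lux lborel (\<lambda>_. 2) (\<lambda>\<xi>. 1 * norm (phi_j chi j \<xi> *\<^sub>R g \<tau> \<xi>))) = Ng"
        unfolding Ng_def Lp_g ..
      finally have h: "ennreal s0 * Lt_norm 1 Nu \<le> ennreal 22 * Lt_norm 1 Ng" .
      have "ennreal (2 powr (real_of_int j * (5/2))) = ennreal (2 powr (real_of_int j * (1/2))) * ennreal s0"
        unfolding s0e by (simp add: ennreal_mult'[symmetric] powr_add[symmetric] algebra_simps)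
      hence "ennreal (2 powr (real_of_int j * (5/2))) * Lt_norm 1 Nu = ennreal (2 powr (real_of_int j * (1/2))) * (ennreal s0 * Lt_norm 1 Nu)"
        by (simp add: mult.assoc)
      also have "\<dots> \<le> ennreal (2 powr (real_of_int j * (1/2))) * (ennreal 22 * Lt_norm 1 Ng)"
        by (intro mult_left_mono h) auto
      also have "\<dots> = ennreal 22 * (ennreal (2 powr (real_of_int j * (1/2))) * Lt_norm 1 Ng)"
        by (simp add: mult_ac)
      finally show "ennreal (2 powr (real_of_int j * (5/2))) * Lt_norm 1 (\<lambda>t. Lp_norm 2 (\<lambda>\<xi>. norm (phi_j chi j \<xi> *\<^sub>R duhamel_hat g t \<xi>)))
          \<le> ennreal 22 * (ennreal (2 powr (real_of_int j * (1/2))) * Lt_norm 1 (\<lambda>t. Lp_norm 2 (\<lambda>\<xi>. norm (phi_j chi j \<xi> *\<^sub>R g t \<xi>))))"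
        unfolding Nu_def Ng_def .
    qed
    have part3: "CL_norm chi \<top> (1/2) 2 (duhamel_hat g) \<le> ennreal 22 * L"
      unfolding CL_norm_def L_def
    proof (rule zsum_mono_cmult)
      fix j
      have "Lt_norm \<top> (\<lambda>t. Lp_norm 2 (\<lambda>\<xi>. norm (phi_j chi j \<xi> *\<^sub>R duhamel_hat g t \<xi>)))
          = Lt_norm \<top> (\<lambda>t. lux lborel (\<lambda>_. 2) (\<lambda>\<xi>. 2 powr (real_of_int j * 2 * inv_exp \<top>) * 1 * norm (phi_j chi j \<xi> *\<^sub>R duhamel_hat g t \<xi>)))"
        unfolding Lp_u by (simp add: inv_exp_def)
      also have "\<dots> \<le> ennreal 22 * Lt_norm 1 (\<lambda>\<tau>. lux lborel (\<lambda>_. 2) (\<lambda>\<xi>. 1 * norm (phi_j chi j \<xi> *\<^sub>R g \<tau> \<xi>)))"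
        by (rule core[OF a gm]) auto
      finally have h: "Lt_norm \<top> (\<lambda>t. Lp_norm 2 (\<lambda>\<xi>. norm (phi_j chi j \<xi> *\<^sub>R duhamel_hat g t \<xi>)))
          \<le> ennreal 22 * Lt_norm 1 (\<lambda>t. Lp_norm 2 (\<lambda>\<xi>. norm (phi_j chi j \<xi> *\<^sub>R g t \<xi>)))"
        unfolding Lp_g .
      have "ennreal (2 powr (real_of_int j * (1/2))) * Lt_norm \<top> (\<lambda>t. Lp_norm 2 (\<lambda>\<xi>. norm (phi_j chi j \<xi> *\<^sub>R duhamel_hat g t \<xi>)))
          \<le> ennreal (2 powr (real_of_int j * (1/2))) * (ennreal 22 * Lt_norm 1 (\<lambda>t. Lp_norm 2 (\<lambda>\<xi>. norm (phi_j chi j \<xi> *\<^sub>R g t \<xi>))))"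
        by (intro mult_left_mono h) auto
      then show "ennreal (2 powr (real_of_int j * (1/2))) * Lt_norm \<top> (\<lambda>t. Lp_norm 2 (\<lambda>\<xi>. norm (phi_j chi j \<xi> *\<^sub>R duhamel_hat g t \<xi>)))
          \<le> ennreal 22 * (ennreal (2 powr (real_of_int j * (1/2))) * Lt_norm 1 (\<lambda>t. Lp_norm 2 (\<lambda>\<xi>. norm (phi_j chi j \<xi> *\<^sub>R g t \<xi>))))"
        by (simp add: mult_ac)
    qed
    have VL: "ennreal 22 * V \<le> ennreal 22 * (V + L)" "ennreal 22 * L \<le> ennreal 22 * (V + L)"
      by (intro mult_left_mono; simp)+
    show "X_norm chi p \<rho> (duhamel_hat g) \<le> ennreal 22 * (CL_var_norm chi 1 (\<lambda>\<xi>. 2 - 3 / p \<xi>) p g + CL_norm chi 1 (1/2) 2 g)"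
      unfolding X_norm_def V_def[symmetric] L_def[symmetric]
      using part1 part2 part3 VL by (auto intro: order.trans)
  qed
qed

end
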